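(* Let $X\subseteq\mathbb{C}^n$ be a complex analytic variety, $x\in X$, and $M$ a free $\mathcal{O}_{X,x}$-submodule of $\mathcal{O}_{X,x}^p$ of rank $k\in\mathbb{N}$. Then $I_{2k}(M_D)\subseteq I_\Delta^{k-1}\,I_2((I_k(M))_D)$.
   Context: $z_1,\dots,z_n$ are coordinates on $\mathbb{C}^n$, $\pi_1,\pi_2:X\times X\to X$ the projections, $I_\Delta\subseteq\mathcal{O}_{X\times X,(x,x)}$ the ideal generated by $z_i\circ\pi_1-z_i\circ\pi_2$. For $h$ in $\mathcal{O}_{X,x}^p$ or $\mathcal{O}_{X,x}$, $h_D=(h\circ\pi_1,h\circ\pi_2)$; for a module or ideal $N$, $N_D$ is the submodule over $\mathcal{O}_{X\times X,(x,x)}$ generated by $\{h_D:h\in N\}$. $I_j(N)$ is the ideal of $j\times j$ minors of a matrix of generators of $N$. *)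

theory Defs
  imports "HOL-Analysis.Analysis"
begin

definition holo_on :: "(complex^'m \<Rightarrow> complex) \<Rightarrow> (complex^'m) set \<Rightarrow> bool" where
  "holo_on f U \<longleftrightarrow> open U \<and>
     (\<forall>z\<in>U. \<exists>D. (f has_derivative D) (at z) \<and> (\<forall>c v. D (c *s v) = c * D v))"

text \<open>f represents a germ at a of a holomorphic function (on the ambient space).\<close>
definition ogerm :: "complex^'m \<Rightarrow> (complex^'m \<Rightarrow> complex) \<Rightarrow> bool" where
  "ogerm a f \<longleftrightarrow> (\<exists>U. a \<in> U \<and> holo_on f U)"

text \<open>Equality of germs at a on the set S (i.e. equality in O_{S,a}).\<close>
definition germ_eq :: "(complex^'m) set \<Rightarrow> complex^'m \<Rightarrow> (complex^'m \<Rightarrow> complex)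
    \<Rightarrow> (complex^'m \<Rightarrow> complex) \<Rightarrow> bool" where
  "germ_eq S a f g \<longleftrightarrow> (\<exists>U. open U \<and> a \<in> U \<and> (\<forall>z\<in>U \<inter> S. f z = g z))"

definition analytic_variety :: "(complex^'n) set \<Rightarrow> bool" where
  "analytic_variety X \<longleftrightarrow> (\<forall>y\<in>X. \<exists>U F. open U \<and> y \<in> U \<and> finite F \<and>
      (\<forall>f\<in>F. holo_on f U) \<and> X \<inter> U = {z\<in>U. \<forall>f\<in>F. f z = 0})"

text \<open>The ideal of O_{S,a} generated by a set G of germs (as a set of representatives).\<close>
definition ideal_gen :: "(complex^'m) set \<Rightarrow> complex^'m \<Rightarrow> (complex^'m \<Rightarrow> complex) set
    \<Rightarrow> (complex^'m \<Rightarrow> complex) set" where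
  "ideal_gen S a G = {g. ogerm a g \<and> (\<exists>(N::nat) c q. (\<forall>j<N. ogerm a (c j) \<and> q j \<in> G) \<and>
       germ_eq S a g (\<lambda>z. \<Sum>j<N. c j z * q j z))}"

definition ideal_mult :: "(complex^'m) set \<Rightarrow> complex^'m \<Rightarrow> (complex^'m \<Rightarrow> complex) set
    \<Rightarrow> (complex^'m \<Rightarrow> complex) set \<Rightarrow> (complex^'m \<Rightarrow> complex) set" where
  "ideal_mult S a I J = ideal_gen S a {h. \<exists>f g. f \<in> I \<and> g \<in> J \<and> h = (\<lambda>z. f z * g z)}"

primrec ideal_pow :: "(complex^'m) set \<Rightarrow> complex^'m \<Rightarrow> (complex^'m \<Rightarrow> complex) set
    \<Rightarrow> nat \<Rightarrow> (complex^'m \<Rightarrow> complex) set" where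
  "ideal_pow S a I 0 = ideal_gen S a {\<lambda>_. 1}"
| "ideal_pow S a I (Suc n) = ideal_mult S a (ideal_pow S a I n) I"

definition detn :: "nat \<Rightarrow> (nat \<Rightarrow> nat \<Rightarrow> complex) \<Rightarrow> complex" where
  "detn N A = (\<Sum>\<pi> | \<pi> permutes {..<N}. of_int (sign \<pi>) * (\<Prod>i<N. A i (\<pi> i)))"

text \<open>j x j minors of the matrix whose columns are the (generating) vectors in N;
  vectors are functions from a finite row index type to germs.\<close>
definition minors :: "nat \<Rightarrow> ('r \<Rightarrow> complex^'m \<Rightarrow> complex) set \<Rightarrow> (complex^'m \<Rightarrow> complex) set" where
  "minors j N = {f. \<exists>col rw. (\<forall>t<j. col t \<in> N) \<and> inj_on rw {..<j} \<and>
       f = (\<lambda>z. detn j (\<lambda>s t. col t (rw s) z))}"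

text \<open>I_j(N) for the module generated by N in O_{S,a}^r.\<close>
definition I_minors :: "(complex^'m) set \<Rightarrow> complex^'m \<Rightarrow> nat
    \<Rightarrow> ('r \<Rightarrow> complex^'m \<Rightarrow> complex) set \<Rightarrow> (complex^'m \<Rightarrow> complex) set" where
  "I_minors S a j N = ideal_gen S a (minors j N)"

definition pi1 :: "complex^('n + 'n) \<Rightarrow> complex^'n" where
  "pi1 w = (\<chi> i. w $ Inl i)"

definition pi2 :: "complex^('n + 'n) \<Rightarrow> complex^'n" where
  "pi2 w = (\<chi> i. w $ Inr i)"

definition XX :: "(complex^'n) set \<Rightarrow> (complex^('n + 'n)) set" where
  "XX X = {w. pi1 w \<in> X \<and> pi2 w \<in> X}"

definition dpt :: "complex^'n \<Rightarrow> complex^('n + 'n)" where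
  "dpt x = (\<chi> j. case j of Inl i \<Rightarrow> x $ i | Inr i \<Rightarrow> x $ i)"

definition I_Delta :: "(complex^'n) set \<Rightarrow> complex^'n \<Rightarrow> (complex^('n + 'n) \<Rightarrow> complex) set" where
  "I_Delta X x = ideal_gen (XX X) (dpt x) {f. \<exists>i. f = (\<lambda>w. pi1 w $ i - pi2 w $ i)}"

text \<open>h_D = (h o pi1, h o pi2), a vector with rows indexed by 'r + 'r.\<close>
definition Dvec :: "('r \<Rightarrow> complex^'n \<Rightarrow> complex) \<Rightarrow> ('r + 'r) \<Rightarrow> complex^('n + 'n) \<Rightarrow> complex" where
  "Dvec h = (\<lambda>r w. case r of Inl r' \<Rightarrow> h r' (pi1 w) | Inr r' \<Rightarrow> h r' (pi2 w))"

text \<open>Generating set {h_D : h in N} of N_D.\<close>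
definition Dset :: "('r \<Rightarrow> complex^'n \<Rightarrow> complex) set \<Rightarrow> (('r + 'r) \<Rightarrow> complex^('n + 'n) \<Rightarrow> complex) set" where
  "Dset N = Dvec ` N"

text \<open>An ideal viewed as a submodule of O^1.\<close>
definition ideal_vecs :: "(complex^'n \<Rightarrow> complex) set \<Rightarrow> (unit \<Rightarrow> complex^'n \<Rightarrow> complex) set" where
  "ideal_vecs I = (\<lambda>g. \<lambda>_. g) ` I"

definition span_mod :: "(complex^'n) set \<Rightarrow> complex^'n \<Rightarrow> nat
    \<Rightarrow> (nat \<Rightarrow> 'p \<Rightarrow> complex^'n \<Rightarrow> complex) \<Rightarrow> ('p \<Rightarrow> complex^'n \<Rightarrow> complex) set" where
  "span_mod X x k m = {h. (\<forall>r. ogerm x (h r)) \<and> (\<exists>a. (\<forall>i<k. ogerm x (a i)) \<and>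
      (\<forall>r. germ_eq X x (h r) (\<lambda>z. \<Sum>i<k. a i z * m i r z)))}"

definition lin_indep_germs :: "(complex^'n) set \<Rightarrow> complex^'n \<Rightarrow> nat
    \<Rightarrow> (nat \<Rightarrow> 'p \<Rightarrow> complex^'n \<Rightarrow> complex) \<Rightarrow> bool" where
  "lin_indep_germs X x k m \<longleftrightarrow> (\<forall>i<k. \<forall>r. ogerm x (m i r)) \<and>
     (\<forall>a. (\<forall>i<k. ogerm x (a i)) \<and> (\<forall>r. germ_eq X x (\<lambda>z. \<Sum>i<k. a i z * m i r z) (\<lambda>_. 0))
        \<longrightarrow> (\<forall>i<k. germ_eq X x (a i) (\<lambda>_. 0)))"

end

theory Submission
  imports Defs "HOL-Complex_Analysis.Cauchy_Integral_Formula" "Jordan_Normal_Form.Determinant"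
begin


definition Dfr :: "(complex^'m \<Rightarrow> complex) \<Rightarrow> complex^'m \<Rightarrow> complex^'m \<Rightarrow> complex" where
  "Dfr f z = frechet_derivative f (at z)"

lemma holo_onD:
  assumes "holo_on f U" "z \<in> U"
  shows "(f has_derivative Dfr f z) (at z)" "Dfr f z (c *s v) = c * Dfr f z v"
proof -
  obtain D where D: "(f has_derivative D) (at z)" "\<forall>c v. D (c *s v) = c * D v"
    using assms unfolding holo_on_def by blast
  have "D = Dfr f z" using D(1) unfolding Dfr_def by (rule frechet_derivative_at)
  with D show "(f has_derivative Dfr f z) (at z)" "Dfr f z (c *s v) = c * Dfr f z v" by auto
qed

lemma holo_on_open: "holo_on f U \<Longrightarrow> open U"
  by (simp add: holo_on_def)

lemma holo_on_cont: "holo_on f U \<Longrightarrow> continuous_on U f"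
  by (meson continuous_at_imp_continuous_on has_derivative_continuous holo_onD(1))

lemma axis_scale: "axis j (c::complex) = c *s axis j 1"
  by (simp add: Finite_Cartesian_Product.vec_eq_iff axis_def)

lemma linear_axis: "linear (axis j :: complex \<Rightarrow> complex^'m)"
  by (rule linearI) (simp_all add: Finite_Cartesian_Product.vec_eq_iff axis_def)

lemma bl_axis: "bounded_linear (axis j :: complex \<Rightarrow> complex^'m)"
  using linear_axis linear_conv_bounded_linear by blast

lemma norm_axis_c: "norm (axis j (u::complex)) = norm u"
proof -
  have "norm (axis j u) = sqrt (\<Sum>i\<in>UNIV. (norm (axis j u $ i))\<^sup>2)"
    by (simp add: norm_vec_def L2_set_def)
  also have "\<dots> = sqrt (\<Sum>i\<in>UNIV. if i = j then (norm u)\<^sup>2 else 0)"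
    by (rule arg_cong[where f=sqrt], rule sum.cong) (auto simp: axis_def)
  also have "\<dots> = norm u" by simp
  finally show ?thesis .
qed

lemma lin_expand:
  fixes D :: "complex^'m \<Rightarrow> complex"
  assumes "linear D" "\<And>c v. D (c *s v) = c * D v"
  shows "D v = (\<Sum>i\<in>UNIV. v $ i * D (axis i 1))"
proof -
  have "(\<Sum>i\<in>UNIV. (v $ i) *s axis i 1) $ k = v $ k" for k
  proof -
    have "(\<Sum>i\<in>UNIV. ((v $ i) *s axis i 1) $ k) = (\<Sum>i\<in>UNIV. if i = k then v $ i else 0)"
      by (rule sum.cong) (auto simp: axis_def)
    then show ?thesis by (simp add: sum_component)
  qed
  then have "v = (\<Sum>i\<in>UNIV. (v $ i) *s axis i 1)"
    by (simp add: Finite_Cartesian_Product.vec_eq_iff)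
  then have "D v = D (\<Sum>i\<in>UNIV. (v $ i) *s axis i 1)" by (rule arg_cong)
  also have "\<dots> = (\<Sum>i\<in>UNIV. D ((v $ i) *s axis i 1))"
    using assms(1) by (simp add: linear_sum)
  also have "\<dots> = (\<Sum>i\<in>UNIV. v $ i * D (axis i 1))" by (simp add: assms(2))
  finally show ?thesis .
qed

lemma Dfr_expand:
  assumes "holo_on f U" "z \<in> U"
  shows "Dfr f z v = (\<Sum>i\<in>UNIV. v $ i * Dfr f z (axis i 1))"
proof -
  have "linear (Dfr f z)" using has_derivative_linear[OF holo_onD(1)[OF assms]] .
  then show ?thesis by (rule lin_expand) (rule holo_onD(2)[OF assms])
qed

lemma pd_circle:
  assumes h: "holo_on a U" and r: "r > 0" and sub: "cball z r \<subseteq> U"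
  shows "Dfr a z (axis j 1) = 1 / (2 * of_real pi * \<i>) *
     contour_integral (circlepath 0 r) (\<lambda>u. a (z + axis j u) / (u - 0)\<^sup>2)"
proof -
  define W where "W = (\<lambda>u. z + axis j u) -` U"
  have cW: "continuous_on UNIV (\<lambda>u. z + axis j (u::complex))"
    by (rule continuous_on_add[OF continuous_on_const linear_continuous_on[OF bl_axis]])
  have oW: "open W" unfolding W_def
    by (rule open_vimage[OF holo_on_open[OF h] cW])
  have cb: "cball 0 r \<subseteq> W" proof
    fix u assume "u \<in> cball (0::complex) r"
    then have "z + axis j u \<in> cball z r" by (simp add: dist_norm norm_axis_c)
    then show "u \<in> W" using sub by (auto simp: W_def)
  qed
  have der: "((\<lambda>u. a (z + axis j u)) has_field_derivative Dfr a (z + axis j u) (axis j 1)) (at u)"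
    if "u \<in> W" for u
  proof -
    have y: "z + axis j u \<in> U" using that by (simp add: W_def)
    have d1: "((\<lambda>u. z + axis j u) has_derivative axis j) (at u)"
      using has_derivative_add[OF has_derivative_const bounded_linear_imp_has_derivative[OF bl_axis]] by simp
    have dd: "((\<lambda>u. a (z + axis j u)) has_derivative (\<lambda>h. Dfr a (z+axis j u) (axis j h))) (at u)"
      using has_derivative_compose[OF d1 holo_onD(1)[OF h y]] by simp
    have eq: "(\<lambda>h. Dfr a (z+axis j u) (axis j h)) = (*) (Dfr a (z + axis j u) (axis j 1))"
    proof
      fix h show "Dfr a (z+axis j u) (axis j h) = Dfr a (z + axis j u) (axis j 1) * h"
        using holo_onD(2)[OF h y, of h "axis j 1"] axis_scale[of j h] by (simp only: mult.commute)
    qed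
    show ?thesis using dd unfolding eq has_field_derivative_def .
  qed
  have hol: "(\<lambda>u. a (z + axis j u)) holomorphic_on W"
    using der unfolding holomorphic_on_def field_differentiable_def
    by (meson has_field_derivative_at_within)
  have cont: "continuous_on W (\<lambda>u. a (z + axis j u))"
    by (rule holomorphic_on_imp_continuous_on[OF hol])
  have 1: "((\<lambda>u. a (z + axis j u)) has_field_derivative 1 / (2 * of_real pi * \<i>) *
     contour_integral (circlepath 0 r) (\<lambda>u. a (z + axis j u) / (u - 0)\<^sup>2)) (at 0)"
    apply (rule Cauchy_derivative_integral_circlepath)
    using cont cb apply (meson continuous_on_subset)
    using hol cb ball_subset_cball apply (meson holomorphic_on_subset order_trans)
    using r by simp
  have 0: "(0::complex) \<in> W" using cb r by auto
  have 2: "((\<lambda>u. a (z + axis j u)) has_field_derivative Dfr a z (axis j 1)) (at 0)"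
    using der[OF 0] by (simp add: axis_def Finite_Cartesian_Product.zero_vec_def[symmetric])
  show ?thesis using DERIV_unique[OF 2 1] .
qed


definition Kr :: "real \<Rightarrow> real \<Rightarrow> complex" where
  "Kr r s = 1 / (2 * of_real pi * \<i>) * (vector_derivative (circlepath 0 r) (at s) / (circlepath 0 r s)\<^sup>2)"

lemma Kr_eq: "r \<noteq> 0 \<Longrightarrow> Kr r s = inverse (of_real r * exp (2 * of_real pi * \<i> * of_real s))"
  unfolding Kr_def vector_derivative_circlepath
  by (simp add: circlepath field_simps power2_eq_square)

lemma Kr_cont: "r \<noteq> 0 \<Longrightarrow> continuous_on S (Kr r)"
  by (simp add: Kr_eq continuous_intros)

lemma norm_circ: "r \<ge> 0 \<Longrightarrow> norm (circlepath 0 r s) = r"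
  by (simp add: circlepath norm_mult)

lemma circ_cont: "continuous_on S (circlepath 0 r)"
  by (simp add: circlepath continuous_intros)

lemma alg1: "(c::complex) * (A / (B - 0)\<^sup>2 * V) = c * (V / B\<^sup>2) * A"
  by (simp add: divide_inverse ac_simps)

lemma pd_int:
  assumes h: "holo_on a U" and r: "r > 0" and sub: "cball z r \<subseteq> U"
  shows "Dfr a z (axis j 1) = integral {0..1} (\<lambda>s. Kr r s * a (z + axis j (circlepath 0 r s)))"
proof -
  have "Dfr a z (axis j 1) = 1 / (2 * of_real pi * \<i>) *
     integral {0..1} (\<lambda>s. a (z + axis j (circlepath 0 r s)) / (circlepath 0 r s - 0)\<^sup>2 *
        vector_derivative (circlepath 0 r) (at s))"
    using pd_circle[OF assms, of j] by (simp add: contour_integral_integral)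
  also have "\<dots> = integral {0..1} (\<lambda>s. 1 / (2 * of_real pi * \<i>) * (a (z + axis j (circlepath 0 r s)) / (circlepath 0 r s - 0)\<^sup>2 *
        vector_derivative (circlepath 0 r) (at s)))"
    by (rule integral_mult_right[symmetric])
  also have "\<dots> = integral {0..1} (\<lambda>s. Kr r s * a (z + axis j (circlepath 0 r s)))"
    by (rule integral_cong) (simp only: Kr_def alg1)
  finally show ?thesis .
qed

lemma pd_cont:
  assumes h: "holo_on a U" and r: "r > 0" and sub: "\<And>z. z \<in> S \<Longrightarrow> cball z r \<subseteq> U"
  shows "continuous_on S (\<lambda>z. Dfr a z (axis j 1))"
proof -
  have "continuous_on S (\<lambda>z. integral (cbox 0 1) (\<lambda>s. Kr r s * a (z + axis j (circlepath 0 r s))))"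
  proof (rule integral_continuous_on_param)
    have c1: "continuous_on (S \<times> cbox 0 1) (\<lambda>x. Kr r (snd x))"
      using Kr_cont[of r UNIV] r by (auto intro!: continuous_on_compose2[of UNIV "Kr r"] continuous_intros)
    have c2: "continuous_on (S \<times> cbox 0 1) (\<lambda>x. fst x + axis j (circlepath 0 r (snd x)))"
      by (intro continuous_intros continuous_on_compose2[OF linear_continuous_on[OF bl_axis], of _ "\<lambda>x. circlepath 0 r (snd x)"]
          continuous_on_compose2[OF circ_cont[of UNIV r]]) auto
    have im: "(\<lambda>x. fst x + axis j (circlepath 0 r (snd x))) ` (S \<times> cbox 0 1) \<subseteq> U"
    proof clarify
      fix z s assume "z \<in> S" "s \<in> cbox (0::real) 1"
      have "z + axis j (circlepath 0 r s) \<in> cball z r"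
        using r by (simp add: dist_norm norm_axis_c norm_circ)
      then show "fst (z, s) + axis j (circlepath 0 r (snd (z, s))) \<in> U" using sub[OF \<open>z \<in> S\<close>] by auto
    qed
    have c3: "continuous_on (S \<times> cbox 0 1) (\<lambda>x. a (fst x + axis j (circlepath 0 r (snd x))))"
      by (rule continuous_on_compose2[OF holo_on_cont[OF h] c2 im])
    show "continuous_on (S \<times> cbox 0 1) (\<lambda>(z, s). Kr r s * a (z + axis j (circlepath 0 r s)))"
      using continuous_on_mult[OF c1 c3] by (simp add: case_prod_beta)
  qed
  moreover have "\<And>z. z \<in> S \<Longrightarrow> Dfr a z (axis j 1) = integral (cbox 0 1) (\<lambda>s. Kr r s * a (z + axis j (circlepath 0 r s)))"
    using pd_int[OF h r sub] by (simp add: cbox_interval)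
  ultimately show ?thesis using continuous_on_cong by (metis (no_types, lifting))
qed


lemma linear_pi1: "linear (pi1 :: complex^('n+'n) \<Rightarrow> complex^'n)"
  by (rule linearI) (simp_all add: Finite_Cartesian_Product.vec_eq_iff pi1_def)

lemma linear_pi2: "linear (pi2 :: complex^('n+'n) \<Rightarrow> complex^'n)"
  by (rule linearI) (simp_all add: Finite_Cartesian_Product.vec_eq_iff pi2_def)

lemma bl_pi1: "bounded_linear (pi1 :: complex^('n+'n) \<Rightarrow> complex^'n)"
  using linear_pi1 linear_conv_bounded_linear by blast

lemma bl_pi2: "bounded_linear (pi2 :: complex^('n+'n) \<Rightarrow> complex^'n)"
  using linear_pi2 linear_conv_bounded_linear by blast

lemma pi1_dpt[simp]: "pi1 (dpt x) = x" by (simp add: Finite_Cartesian_Product.vec_eq_iff pi1_def dpt_def)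
lemma pi2_dpt[simp]: "pi2 (dpt x) = x" by (simp add: Finite_Cartesian_Product.vec_eq_iff pi2_def dpt_def)

lemma cont_pi1[continuous_intros]: "continuous_on S f \<Longrightarrow> continuous_on S (\<lambda>x. pi1 (f x))"
  using bounded_linear.continuous_on[OF bl_pi1] .
lemma cont_pi2[continuous_intros]: "continuous_on S f \<Longrightarrow> continuous_on S (\<lambda>x. pi2 (f x))"
  using bounded_linear.continuous_on[OF bl_pi2] .
lemma cont_axis[continuous_intros]: "continuous_on S f \<Longrightarrow> continuous_on S (\<lambda>x. axis j (f x :: complex))"
  using bounded_linear.continuous_on[OF bl_axis] .

definition Lm :: "real \<Rightarrow> complex^('n+'n) \<Rightarrow> complex^'n" where
  "Lm t h = pi1 h + t *\<^sub>R (pi2 h - pi1 h)"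

lemma bl_Lm: "bounded_linear (Lm t)"
  unfolding Lm_def
  by (rule bounded_linear_add[OF bl_pi1 bounded_linear_compose[OF bounded_linear_scaleR_right bounded_linear_sub[OF bl_pi2 bl_pi1]]])

lemma Lm_scale: "Lm t (c *s h) = c *s Lm t h"
  by (simp add: Finite_Cartesian_Product.vec_eq_iff Lm_def pi1_def pi2_def algebra_simps)

lemma Lm_comp: "(Lm t e) $ i = pi1 e $ i + of_real t * (pi2 e $ i - pi1 e $ i)"
  unfolding Lm_def
  by (simp only: vector_add_component vector_scaleR_component vector_minus_component) (simp add: scaleR_conv_of_real)

lemma Lm_cont[continuous_intros]: "continuous_on S f \<Longrightarrow> continuous_on S g \<Longrightarrow> continuous_on S (\<lambda>x. Lm (f x) (g x))"
  unfolding Lm_def by (intro continuous_intros)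

lemma Lm_convex: "pi1 w \<in> ball x r \<Longrightarrow> pi2 w \<in> ball x r \<Longrightarrow> t \<in> {0..1} \<Longrightarrow> Lm t w \<in> ball x r"
proof -
  assume a: "pi1 w \<in> ball x r" "pi2 w \<in> ball x r" "t \<in> {0..1}"
  have "Lm t w = (1 - t) *\<^sub>R pi1 w + t *\<^sub>R pi2 w" by (simp add: Lm_def algebra_simps)
  moreover have "(1 - t) *\<^sub>R pi1 w + t *\<^sub>R pi2 w \<in> ball x r"
    using a by (intro convexD[OF convex_ball]) auto
  ultimately show ?thesis by simp
qed

definition Yw :: "'n \<Rightarrow> real \<Rightarrow> complex^('n+'n) \<Rightarrow> real \<times> real \<Rightarrow> complex^'n" where
  "Yw j r w \<tau> = Lm (fst \<tau>) w + axis j (circlepath 0 r (snd \<tau>))"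

definition Phi :: "(complex^'n \<Rightarrow> complex) \<Rightarrow> 'n \<Rightarrow> real \<Rightarrow> complex^('n+'n) \<Rightarrow> real \<times> real \<Rightarrow> complex" where
  "Phi a j r w \<tau> = Kr r (snd \<tau>) * a (Yw j r w \<tau>)"

lemma Yw_cont[continuous_intros]: "continuous_on S f \<Longrightarrow> continuous_on S g \<Longrightarrow> continuous_on S (\<lambda>x. Yw j r (f x) (g x))"
  unfolding Yw_def
  by (intro continuous_intros continuous_on_compose2[OF circ_cont[of UNIV r]]) auto

lemma Yw_in:
  assumes "pi1 w \<in> ball x r" "pi2 w \<in> ball x r" "\<tau> \<in> cbox (0,0) (1,1)" "r > 0"
  shows "Yw j r w \<tau> \<in> ball x (2*r)"
proof -
  obtain t s where ts: "\<tau> = (t,s)" "t \<in> {0..1}" using assms(3) by (cases \<tau>) (auto simp: cbox_Pair_iff)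
  have "Lm t w \<in> ball x r" using Lm_convex assms ts by blast
  moreover have "norm (axis j (circlepath 0 r s)) = r" using assms(4) by (simp add: norm_axis_c norm_circ)
  moreover have "dist x (Lm t w + axis j (circlepath 0 r s)) \<le> dist x (Lm t w) + dist (Lm t w) (Lm t w + axis j (circlepath 0 r s))"
    by (rule dist_triangle)
  moreover have "dist (Lm t w) (Lm t w + axis j (circlepath 0 r s)) = norm (axis j (circlepath 0 r s))"
    by (simp add: dist_norm)
  ultimately have "dist x (Lm t w + axis j (circlepath 0 r s)) < 2 * r" by simp
  then show ?thesis by (simp add: Yw_def ts)
qed


lemma hadamard:
  fixes a :: "complex^'n \<Rightarrow> complex"
  assumes "ogerm x a"
  shows "\<exists>V b. open V \<and> dpt x \<in> V \<and> (\<forall>l. holo_on (b l) V) \<and>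
     (\<forall>w\<in>V. a (pi2 w) - a (pi1 w) = (\<Sum>l\<in>UNIV. (pi1 w $ l - pi2 w $ l) * b l w))"
proof -
  obtain U where xU: "x \<in> U" and h: "holo_on a U" using assms ogerm_def by blast
  obtain e where e: "e > 0" "ball x e \<subseteq> U" using open_contains_ball holo_on_open[OF h] xU by blast
  define r where "r = e / 4"
  have r: "r > 0" using e by (simp add: r_def)
  have sub2: "cball z r \<subseteq> U" if "z \<in> ball x (2*r)" for z
  proof
    fix y assume y: "y \<in> cball z r"
    have "dist x y \<le> dist x z + dist z y" by (rule dist_triangle)
    moreover have "dist x z < 2*r" "dist z y \<le> r" using that y by auto
    ultimately have "dist x y < e" using r_def r by linarith
    then show "y \<in> U" using e by auto
  qed
  have bU: "ball x (2*r) \<subseteq> U" using sub2 centre_in_cball r by (meson less_imp_le subset_iff)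
  define V where "V = {w. pi1 w \<in> ball x r \<and> pi2 w \<in> ball x r}"
  have V_eq: "V = pi1 -` ball x r \<inter> pi2 -` ball x r" by (auto simp: V_def)
  have oV: "open V" unfolding V_eq
    by (intro open_Int open_vimage open_ball linear_continuous_on bl_pi1 bl_pi2)
  have cV: "convex V" unfolding V_eq
    by (intro convex_Int convex_linear_vimage linear_pi1 linear_pi2 convex_ball)
  have xV: "dpt x \<in> V" using r by (simp add: V_def)
  have PDc: "continuous_on (ball x (2*r)) (\<lambda>z. Dfr a z (axis i 1))" for i
    using pd_cont[OF h r sub2] .
  let ?C = "cbox (0::real,0::real) (1,1)"
  have Yin: "Yw j r w \<tau> \<in> ball x (2*r)" if "w \<in> V" "\<tau> \<in> ?C" for j w \<tau>
    using Yw_in[of w x r \<tau> j] that r by (auto simp: V_def)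
  have YU: "Yw j r w \<tau> \<in> U" if "w \<in> V" "\<tau> \<in> ?C" for j w \<tau>
    using Yin[OF that] bU by auto
  have Phic: "continuous_on (V \<times> ?C) (\<lambda>x. Phi a j r (fst x) (snd x))" for j
  proof -
    have c1: "continuous_on (V \<times> ?C) (\<lambda>x. Kr r (snd (snd x)))"
      using Kr_cont[of r UNIV] r by (auto intro!: continuous_on_compose2[of UNIV "Kr r"] continuous_intros)
    have c2: "continuous_on (V \<times> ?C) (\<lambda>x. a (Yw j r (fst x) (snd x)))"
      by (rule continuous_on_compose2[OF holo_on_cont[OF h]]) (auto intro!: continuous_intros YU)
    show ?thesis using continuous_on_mult[OF c1 c2] by (simp add: Phi_def)
  qed
  have Phic1: "continuous_on ?C (Phi a j r w)" if "w \<in> V" for j w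
  proof -
    have "continuous_on ?C (Pair w)" by (intro continuous_intros)
    moreover have "Pair w ` ?C \<subseteq> V \<times> ?C" using that by auto
    ultimately show ?thesis using continuous_on_compose2[OF Phic[of j], of ?C "Pair w"] by simp
  qed
  define FX where "FX j w \<tau> = Blinfun (\<lambda>h. Kr r (snd \<tau>) * Dfr a (Yw j r w \<tau>) (Lm (fst \<tau>) h))" for j w \<tau>
  have FXa: "blinfun_apply (FX j w \<tau>) = (\<lambda>h. Kr r (snd \<tau>) * Dfr a (Yw j r w \<tau>) (Lm (fst \<tau>) h))"
    if "w \<in> V" "\<tau> \<in> ?C" for j w \<tau>
    unfolding FX_def
    by (rule bounded_linear_Blinfun_apply, rule bounded_linear_compose[OF bounded_linear_mult_right],
        rule bounded_linear_compose[OF has_derivative_bounded_linear[OF holo_onD(1)[OF h YU[OF that]]] bl_Lm])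
  have FXd: "((\<lambda>w. Phi a j r w \<tau>) has_derivative blinfun_apply (FX j w \<tau>)) (at w within V)"
    if "w \<in> V" "\<tau> \<in> ?C" for j w \<tau>
  proof -
    have d1: "((\<lambda>w. Yw j r w \<tau>) has_derivative Lm (fst \<tau>)) (at w within V)"
      unfolding Yw_def
      using has_derivative_add[OF bounded_linear_imp_has_derivative[OF bl_Lm] has_derivative_const] by simp
    have "((\<lambda>w. a (Yw j r w \<tau>)) has_derivative (\<lambda>h. Dfr a (Yw j r w \<tau>) (Lm (fst \<tau>) h))) (at w within V)"
      using has_derivative_compose[OF d1 holo_onD(1)[OF h YU[OF that]]] by simp
    from has_derivative_mult_right[OF this, of "Kr r (snd \<tau>)"]
    show ?thesis unfolding FXa[OF that] Phi_def .
  qed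
  have FXc: "continuous_on (V \<times> ?C) (\<lambda>x. FX j (fst x) (snd x))" for j
  proof (rule continuous_on_blinfun_componentwise)
    fix e :: "complex^('n+'n)"
    have eq: "blinfun_apply (FX j (fst x) (snd x)) e = Kr r (snd (snd x)) *
       (\<Sum>i\<in>UNIV. (pi1 e $ i + of_real (fst (snd x)) * (pi2 e $ i - pi1 e $ i)) * Dfr a (Yw j r (fst x) (snd x)) (axis i 1))"
      if "x \<in> V \<times> ?C" for x
    proof -
      have "blinfun_apply (FX j (fst x) (snd x)) e = Kr r (snd (snd x)) * Dfr a (Yw j r (fst x) (snd x)) (Lm (fst (snd x)) e)"
        using FXa[of "fst x" "snd x" j] that by auto
      also have "\<dots> = Kr r (snd (snd x)) * (\<Sum>i\<in>UNIV. (Lm (fst (snd x)) e) $ i * Dfr a (Yw j r (fst x) (snd x)) (axis i 1))"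
        using Dfr_expand[OF h YU[of "fst x" "snd x" j]] that by auto
      also have "\<dots> = Kr r (snd (snd x)) *
       (\<Sum>i\<in>UNIV. (pi1 e $ i + of_real (fst (snd x)) * (pi2 e $ i - pi1 e $ i)) * Dfr a (Yw j r (fst x) (snd x)) (axis i 1))"
        by (simp only: Lm_comp)
      finally show ?thesis .
    qed
    have c1: "continuous_on (V \<times> ?C) (\<lambda>x. Kr r (snd (snd x)))"
      using Kr_cont[of r UNIV] r by (auto intro!: continuous_on_compose2[of UNIV "Kr r"] continuous_intros)
    have c2: "continuous_on (V \<times> ?C) (\<lambda>x. Dfr a (Yw j r (fst x) (snd x)) (axis i 1))" for i
      by (rule continuous_on_compose2[OF PDc[of i]]) (auto intro!: continuous_intros Yin)
    have "continuous_on (V \<times> ?C) (\<lambda>x. Kr r (snd (snd x)) *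
       (\<Sum>i\<in>UNIV. (pi1 e $ i + of_real (fst (snd x)) * (pi2 e $ i - pi1 e $ i)) * Dfr a (Yw j r (fst x) (snd x)) (axis i 1)))"
      by (intro continuous_intros c1 c2)
    then show "continuous_on (V \<times> ?C) (\<lambda>x. blinfun_apply (FX j (fst x) (snd x)) e)"
      using continuous_on_cong eq by (metis (no_types, lifting))
  qed
  define B where "B j w = - integral ?C (Phi a j r w)" for j w
  have holB: "holo_on (B j) V" for j
    unfolding holo_on_def
  proof (intro conjI oV ballI)
    fix w0 assume w0: "w0 \<in> V"
    have L: "((\<lambda>w. integral ?C (Phi a j r w)) has_derivative blinfun_apply (integral ?C (FX j w0))) (at w0 within V)"
    proof (rule leibniz_rule[where fx="FX j"])
      show "\<And>x t. x \<in> V \<Longrightarrow> t \<in> ?C \<Longrightarrow> ((\<lambda>x. Phi a j r x t) has_derivative blinfun_apply (FX j x t)) (at x within V)"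
        by (rule FXd)
      show "\<And>x. x \<in> V \<Longrightarrow> Phi a j r x integrable_on ?C"
        using Phic1 integrable_continuous by blast
      show "continuous_on (V \<times> ?C) (\<lambda>(x, t). FX j x t)"
        using FXc[of j] by (simp add: case_prod_beta)
    qed (use w0 cV in auto)
    then have L': "((\<lambda>w. integral ?C (Phi a j r w)) has_derivative blinfun_apply (integral ?C (FX j w0))) (at w0)"
      using at_within_open[OF w0 oV] by simp
    have intFX: "(FX j w0) integrable_on ?C"
    proof -
      have "continuous_on ?C (Pair w0)" by (intro continuous_intros)
      moreover have "Pair w0 ` ?C \<subseteq> V \<times> ?C" using w0 by auto
      ultimately show ?thesis using continuous_on_compose2[OF FXc[of j], of ?C "Pair w0"]
        by (simp add: integrable_continuous)
    qed
    have app: "blinfun_apply (integral ?C (FX j w0)) v = integral ?C (\<lambda>\<tau>. blinfun_apply (FX j w0 \<tau>) v)" for v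
      using integral_linear[OF intFX bounded_linear_apply_blinfun[of v]] by (simp add: o_def)
    have lin: "blinfun_apply (integral ?C (FX j w0)) (c *s v) = c * blinfun_apply (integral ?C (FX j w0)) v" for c v
    proof -
      have "integral ?C (\<lambda>\<tau>. blinfun_apply (FX j w0 \<tau>) (c *s v)) = integral ?C (\<lambda>\<tau>. c * blinfun_apply (FX j w0 \<tau>) v)"
      proof (rule integral_cong)
        fix \<tau> assume t: "\<tau> \<in> ?C"
        show "blinfun_apply (FX j w0 \<tau>) (c *s v) = c * blinfun_apply (FX j w0 \<tau>) v"
          unfolding FXa[OF w0 t] Lm_scale holo_onD(2)[OF h YU[OF w0 t]] by simp
      qed
      then show ?thesis unfolding app by (simp add: integral_mult_right)
    qed
    show "\<exists>D. (B j has_derivative D) (at w0) \<and> (\<forall>c v. D (c *s v) = c * D v)"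
      apply (rule exI[of _ "\<lambda>h. - blinfun_apply (integral ?C (FX j w0)) h"])
      using has_derivative_minus[OF L'] lin unfolding B_def by (simp add: fun_eq_iff)
  qed
  have ident: "a (pi2 w) - a (pi1 w) = (\<Sum>l\<in>UNIV. (pi1 w $ l - pi2 w $ l) * B l w)" if w: "w \<in> V" for w
  proof -
    define p where "p = pi1 w"
    define q where "q = pi2 w"
    have Lmw: "Lm t w = p + t *\<^sub>R (q - p)" for t by (simp add: Lm_def p_def q_def)
    have Lin: "Lm t w \<in> ball x r" if "t \<in> {0..1}" for t
      using Lm_convex[of w x r t] w that by (auto simp: V_def)
    have LU: "Lm t w \<in> U" if "t \<in> {0..1}" for t
      using Lin[OF that] bU r by auto
    have FTC: "((\<lambda>t. Dfr a (Lm t w) (q - p)) has_integral (a q - a p)) {0..1}"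
    proof -
      have "((\<lambda>t. a (Lm t w)) has_vector_derivative Dfr a (Lm t w) (q - p)) (at t within {0..1})"
        if t: "t \<in> {0..1}" for t
      proof -
        have d1: "((\<lambda>t. Lm t w) has_derivative (\<lambda>h. h *\<^sub>R (q - p))) (at t within {0..1})"
          unfolding Lmw by (auto intro!: derivative_eq_intros)
        have "((\<lambda>t. a (Lm t w)) has_derivative (\<lambda>h. Dfr a (Lm t w) (h *\<^sub>R (q - p)))) (at t within {0..1})"
          using has_derivative_compose[OF d1 holo_onD(1)[OF h LU[OF t]]] by simp
        moreover have "Dfr a (Lm t w) (h *\<^sub>R (q - p)) = h *\<^sub>R Dfr a (Lm t w) (q - p)" for h
          by (rule linear_cmul[OF has_derivative_linear[OF holo_onD(1)[OF h LU[OF t]]]])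
        ultimately show ?thesis unfolding has_vector_derivative_def by simp
      qed
      from fundamental_theorem_of_calculus[of 0 1, OF _ this]
      show ?thesis by (simp add: Lmw)
    qed
    have contI: "continuous_on {0..1} (\<lambda>t. integral {0..1} (\<lambda>s. Phi a l r w (t, s)))" for l
    proof -
      have "continuous_on (cbox 0 1 \<times> cbox 0 1) (\<lambda>(t, s). Phi a l r w (t, s))"
        using Phic1[OF w, of l] by (simp add: cbox_Pair_eq case_prod_beta')
      from integral_continuous_on_param[OF this] show ?thesis by (simp add: cbox_interval)
    qed
    have eqI: "Dfr a (Lm t w) (q - p) = (\<Sum>l\<in>UNIV. (q - p) $ l * integral {0..1} (\<lambda>s. Phi a l r w (t, s)))"
      if t: "t \<in> {0..1}" for t
    proof -
      have "Dfr a (Lm t w) (q - p) = (\<Sum>l\<in>UNIV. (q - p) $ l * Dfr a (Lm t w) (axis l 1))"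
        by (rule Dfr_expand[OF h LU[OF t]])
      also have "\<dots> = (\<Sum>l\<in>UNIV. (q - p) $ l * integral {0..1} (\<lambda>s. Phi a l r w (t, s)))"
      proof (rule sum.cong[OF refl])
        fix l
        have cb: "cball (Lm t w) r \<subseteq> U" using sub2 Lin[OF t] r by auto
        show "(q - p) $ l * Dfr a (Lm t w) (axis l 1) = (q - p) $ l * integral {0..1} (\<lambda>s. Phi a l r w (t, s))"
          using pd_int[OF h r cb, of l] by (simp add: Phi_def Yw_def)
      qed
      finally show ?thesis .
    qed
    have "a q - a p = integral {0..1} (\<lambda>t. Dfr a (Lm t w) (q - p))"
      using FTC by (simp add: integral_unique)
    also have "\<dots> = integral {0..1} (\<lambda>t. \<Sum>l\<in>UNIV. (q - p) $ l * integral {0..1} (\<lambda>s. Phi a l r w (t, s)))"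
      by (rule integral_cong) (rule eqI)
    also have "\<dots> = (\<Sum>l\<in>UNIV. integral {0..1} (\<lambda>t. (q - p) $ l * integral {0..1} (\<lambda>s. Phi a l r w (t, s))))"
      by (rule integral_sum) (auto intro!: integrable_continuous_interval continuous_intros contI)
    also have "\<dots> = (\<Sum>l\<in>UNIV. (q - p) $ l * integral {0..1} (\<lambda>t. integral {0..1} (\<lambda>s. Phi a l r w (t, s))))"
      by (simp add: integral_mult_right)
    also have "\<dots> = (\<Sum>l\<in>UNIV. (q - p) $ l * integral ?C (Phi a l r w))"
    proof (rule sum.cong[OF refl])
      fix l
      show "(q - p) $ l * integral {0..1} (\<lambda>t. integral {0..1} (\<lambda>s. Phi a l r w (t, s))) = (q - p) $ l * integral ?C (Phi a l r w)"
        using integral_prod_continuous[OF Phic1[OF w, of l]] by (simp add: cbox_interval)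
    qed
    also have "\<dots> = (\<Sum>l\<in>UNIV. (pi1 w $ l - pi2 w $ l) * B l w)"
      by (rule sum.cong) (auto simp: B_def p_def q_def algebra_simps)
    finally show ?thesis by (simp add: p_def q_def)
  qed
  show ?thesis
    by (rule exI[of _ V], rule exI[of _ B]) (use oV xV holB ident in auto)
qed




section \<open>Holomorphic germ closure\<close>

lemma holo_on_const: "open U \<Longrightarrow> holo_on (\<lambda>z. c) U"
  unfolding holo_on_def by (auto intro!: exI[of _ "\<lambda>h. 0"] derivative_eq_intros)

lemma holo_on_subset: "holo_on f U \<Longrightarrow> open V \<Longrightarrow> V \<subseteq> U \<Longrightarrow> holo_on f V"
  unfolding holo_on_def by blast

lemma holo_on_add: "holo_on f U \<Longrightarrow> holo_on g U \<Longrightarrow> holo_on (\<lambda>z. f z + g z) U"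
proof -
  assume f: "holo_on f U" and g: "holo_on g U"
  show ?thesis unfolding holo_on_def
  proof (intro conjI ballI)
    show "open U" using f holo_on_open by blast
    fix z assume z: "z \<in> U"
    show "\<exists>D. ((\<lambda>z. f z + g z) has_derivative D) (at z) \<and> (\<forall>c v. D (c *s v) = c * D v)"
      apply (rule exI[of _ "\<lambda>h. Dfr f z h + Dfr g z h"])
      using has_derivative_add[OF holo_onD(1)[OF f z] holo_onD(1)[OF g z]] holo_onD(2)[OF f z] holo_onD(2)[OF g z]
      by (simp add: algebra_simps)
  qed
qed

lemma holo_on_mult: "holo_on f U \<Longrightarrow> holo_on g U \<Longrightarrow> holo_on (\<lambda>z. f z * g z) U"
proof -
  assume f: "holo_on f U" and g: "holo_on g U"
  show ?thesis unfolding holo_on_def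
  proof (intro conjI ballI)
    show "open U" using f holo_on_open by blast
    fix z assume z: "z \<in> U"
    show "\<exists>D. ((\<lambda>z. f z * g z) has_derivative D) (at z) \<and> (\<forall>c v. D (c *s v) = c * D v)"
    proof (intro exI conjI allI)
      show "((\<lambda>z. f z * g z) has_derivative (\<lambda>h. f z * Dfr g z h + Dfr f z h * g z)) (at z)"
        using has_derivative_mult[OF holo_onD(1)[OF f z] holo_onD(1)[OF g z]] .
      fix c v
      have "f z * Dfr g z (c *s v) + Dfr f z (c *s v) * g z = f z * (c * Dfr g z v) + (c * Dfr f z v) * g z"
        by (simp only: holo_onD(2)[OF f z] holo_onD(2)[OF g z])
      also have "\<dots> = c * (f z * Dfr g z v + Dfr f z v * g z)" by (simp only: ring_distribs mult_ac)
      finally show "f z * Dfr g z (c *s v) + Dfr f z (c *s v) * g z = c * (f z * Dfr g z v + Dfr f z v * g z)" .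
    qed
  qed
qed

lemma holo_on_neg: "holo_on f U \<Longrightarrow> holo_on (\<lambda>z. - f z) U"
proof -
  assume f: "holo_on f U"
  have "holo_on (\<lambda>z. (-1) * f z) U" by (rule holo_on_mult[OF holo_on_const[OF holo_on_open[OF f]] f])
  then show ?thesis by simp
qed

lemma ogerm_const[simp, intro]: "ogerm a (\<lambda>z. c)"
  unfolding ogerm_def using holo_on_const[of UNIV] by blast

lemma ogerm_add[intro]: "ogerm a f \<Longrightarrow> ogerm a g \<Longrightarrow> ogerm a (\<lambda>z. f z + g z)"
proof -
  assume "ogerm a f" "ogerm a g"
  then obtain U V where U: "a \<in> U" "holo_on f U" and V: "a \<in> V" "holo_on g V" unfolding ogerm_def by blast
  have "holo_on f (U \<inter> V)" "holo_on g (U \<inter> V)"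
    using holo_on_subset[OF U(2) _ Int_lower1] holo_on_subset[OF V(2) _ Int_lower2]
      open_Int[OF holo_on_open[OF U(2)] holo_on_open[OF V(2)]] by auto
  then show ?thesis unfolding ogerm_def using U V holo_on_add by blast
qed

lemma ogerm_mult[intro]: "ogerm a f \<Longrightarrow> ogerm a g \<Longrightarrow> ogerm a (\<lambda>z. f z * g z)"
proof -
  assume "ogerm a f" "ogerm a g"
  then obtain U V where U: "a \<in> U" "holo_on f U" and V: "a \<in> V" "holo_on g V" unfolding ogerm_def by blast
  have "holo_on f (U \<inter> V)" "holo_on g (U \<inter> V)"
    using holo_on_subset[OF U(2) _ Int_lower1] holo_on_subset[OF V(2) _ Int_lower2]
      open_Int[OF holo_on_open[OF U(2)] holo_on_open[OF V(2)]] by auto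
  then show ?thesis unfolding ogerm_def using U V holo_on_mult by blast
qed

lemma ogerm_neg[intro]: "ogerm a f \<Longrightarrow> ogerm a (\<lambda>z. - f z)"
  unfolding ogerm_def using holo_on_neg by blast

lemma ogerm_diff[intro]: "ogerm a f \<Longrightarrow> ogerm a g \<Longrightarrow> ogerm a (\<lambda>z. f z - g z)"
  using ogerm_add[of a f "\<lambda>z. - g z"] ogerm_neg[of a g] by simp

lemma ogerm_sum: "finite T \<Longrightarrow> (\<And>i. i \<in> T \<Longrightarrow> ogerm a (f i)) \<Longrightarrow> ogerm a (\<lambda>z. \<Sum>i\<in>T. f i z)"
  by (induction T rule: finite_induct) auto

lemma ogerm_prod: "finite T \<Longrightarrow> (\<And>i. i \<in> T \<Longrightarrow> ogerm a (f i)) \<Longrightarrow> ogerm a (\<lambda>z. \<Prod>i\<in>T. f i z)"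
  by (induction T rule: finite_induct) auto

lemma ogerm_holo: "holo_on f V \<Longrightarrow> a \<in> V \<Longrightarrow> ogerm a f"
  unfolding ogerm_def by blast

lemma holo_on_comp_lin:
  fixes L :: "complex^'m \<Rightarrow> complex^'k"
  assumes f: "holo_on f U" and L: "bounded_linear L" and Ls: "\<And>c v. L (c *s v) = c *s L v"
  shows "holo_on (\<lambda>w. f (L w)) (L -` U)"
  unfolding holo_on_def
proof (intro conjI ballI)
  show "open (L -` U)"
    by (rule open_vimage[OF holo_on_open[OF f] linear_continuous_on[OF L]])
  fix w assume w: "w \<in> L -` U"
  then have Lw: "L w \<in> U" by simp
  show "\<exists>D. ((\<lambda>w. f (L w)) has_derivative D) (at w) \<and> (\<forall>c v. D (c *s v) = c * D v)"
    apply (rule exI[of _ "\<lambda>h. Dfr f (L w) (L h)"])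
    using has_derivative_compose[OF bounded_linear_imp_has_derivative[OF L] holo_onD(1)[OF f Lw]]
      holo_onD(2)[OF f Lw] Ls by simp
qed

lemma pi1_scale: "pi1 (c *s v) = c *s pi1 v" by (simp add: Finite_Cartesian_Product.vec_eq_iff pi1_def)
lemma pi2_scale: "pi2 (c *s v) = c *s pi2 v" by (simp add: Finite_Cartesian_Product.vec_eq_iff pi2_def)

lemma ogerm_pi1: "ogerm x f \<Longrightarrow> ogerm (dpt x) (\<lambda>w. f (pi1 w))"
proof -
  assume "ogerm x f"
  then obtain U where U: "x \<in> U" "holo_on f U" unfolding ogerm_def by blast
  have "holo_on (\<lambda>w. f (pi1 w)) (pi1 -` U)" by (rule holo_on_comp_lin[OF U(2) bl_pi1 pi1_scale])
  moreover have "dpt x \<in> pi1 -` U" using U(1) by simp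
  ultimately show ?thesis by (rule ogerm_holo)
qed

lemma ogerm_pi2: "ogerm x f \<Longrightarrow> ogerm (dpt x) (\<lambda>w. f (pi2 w))"
proof -
  assume "ogerm x f"
  then obtain U where U: "x \<in> U" "holo_on f U" unfolding ogerm_def by blast
  have "holo_on (\<lambda>w. f (pi2 w)) (pi2 -` U)" by (rule holo_on_comp_lin[OF U(2) bl_pi2 pi2_scale])
  moreover have "dpt x \<in> pi2 -` U" using U(1) by simp
  ultimately show ?thesis by (rule ogerm_holo)
qed

lemma ogerm_coord: "ogerm (a::complex^'m) (\<lambda>z. z $ i)"
proof -
  have "holo_on (\<lambda>z::complex^'m. z $ i) UNIV"
    unfolding holo_on_def
    by (auto intro!: exI[of _ "\<lambda>h. h $ i"] bounded_linear_imp_has_derivative bounded_linear_vec_nth)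
  then show ?thesis unfolding ogerm_def by blast
qed

section \<open>Germ equality\<close>

lemma germ_eq_refl: "germ_eq S a f f"
  unfolding germ_eq_def by auto

lemma germ_eq_sym: "germ_eq S a f g \<Longrightarrow> germ_eq S a g f"
  unfolding germ_eq_def by metis

lemma germ_eq_trans: "germ_eq S a f g \<Longrightarrow> germ_eq S a g h \<Longrightarrow> germ_eq S a f h"
proof -
  assume "germ_eq S a f g" "germ_eq S a g h"
  then obtain U V where "open U" "a \<in> U" "\<forall>z\<in>U \<inter> S. f z = g z" "open V" "a \<in> V" "\<forall>z\<in>V \<inter> S. g z = h z"
    unfolding germ_eq_def by blast
  then show ?thesis unfolding germ_eq_def by (intro exI[of _ "U \<inter> V"]) auto
qed

lemma germ_eq_finite:
  assumes "finite T" "\<And>i. i \<in> T \<Longrightarrow> germ_eq S a (f i) (g i)"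
  shows "\<exists>U. open U \<and> a \<in> U \<and> (\<forall>i\<in>T. \<forall>z\<in>U \<inter> S. f i z = g i z)"
  using assms
proof (induction T rule: finite_induct)
  case empty then show ?case by (intro exI[of _ UNIV]) auto
next
  case (insert j T)
  then obtain U where U: "open U" "a \<in> U" "\<forall>i\<in>T. \<forall>z\<in>U \<inter> S. f i z = g i z" by blast
  obtain V where V: "open V" "a \<in> V" "\<forall>z\<in>V \<inter> S. f j z = g j z"
    using insert(4)[of j] unfolding germ_eq_def by blast
  show ?case using U V by (intro exI[of _ "U \<inter> V"]) auto
qed

lemma germ_eqI: "open U \<Longrightarrow> a \<in> U \<Longrightarrow> (\<And>z. z \<in> U \<Longrightarrow> z \<in> S \<Longrightarrow> f z = g z) \<Longrightarrow> germ_eq S a f g"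
  unfolding germ_eq_def by blast

section \<open>Generated ideals\<close>

lemma sum_lessThan_add: "(\<Sum>j<n1+n2. f j) = (\<Sum>j<n1. f j) + (\<Sum>j<(n2::nat). f (n1 + j))"
  by (induction n2) (auto simp: add.assoc)

lemma IG_D:
  assumes "f \<in> ideal_gen S a G"
  obtains N :: nat and c q where "\<forall>j<N. ogerm a (c j) \<and> q j \<in> G" "germ_eq S a f (\<lambda>z. \<Sum>j<N. c j z * q j z)" "ogerm a f"
  using assms unfolding ideal_gen_def by auto

lemma IG_germ: "ogerm a g \<Longrightarrow> f \<in> ideal_gen S a G \<Longrightarrow> germ_eq S a g f \<Longrightarrow> g \<in> ideal_gen S a G"
  unfolding ideal_gen_def by (auto intro: germ_eq_trans)

lemma IG_ogerm: "f \<in> ideal_gen S a G \<Longrightarrow> ogerm a f"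
  unfolding ideal_gen_def by auto

lemma IG_gen: "q \<in> G \<Longrightarrow> ogerm a q \<Longrightarrow> q \<in> ideal_gen S a G"
  unfolding ideal_gen_def mem_Collect_eq
  apply (intro conjI, assumption)
  apply (rule exI[of _ "1::nat"], rule exI[of _ "\<lambda>_ _. 1"], rule exI[of _ "\<lambda>_. q"])
  by (auto intro!: germ_eq_refl)

lemma IG_zero: "(\<lambda>z. 0) \<in> ideal_gen S a G"
  unfolding ideal_gen_def by (auto intro!: exI[of _ "0::nat"] germ_eq_refl)

lemma IG_add:
  assumes "f \<in> ideal_gen S a G" "g \<in> ideal_gen S a G"
  shows "(\<lambda>z. f z + g z) \<in> ideal_gen S a G"
proof -
  obtain N1 :: nat and c1 q1 where 1: "\<forall>j<N1. ogerm a (c1 j) \<and> q1 j \<in> G" "germ_eq S a f (\<lambda>z. \<Sum>j<N1. c1 j z * q1 j z)" "ogerm a f"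
    using assms(1) by (rule IG_D)
  obtain N2 :: nat and c2 q2 where 2: "\<forall>j<N2. ogerm a (c2 j) \<and> q2 j \<in> G" "germ_eq S a g (\<lambda>z. \<Sum>j<N2. c2 j z * q2 j z)" "ogerm a g"
    using assms(2) by (rule IG_D)
  define c where "c j = (if j < N1 then c1 j else c2 (j - N1))" for j :: nat
  define q where "q j = (if j < N1 then q1 j else q2 (j - N1))" for j :: nat
  have cq: "\<forall>j<N1+N2. ogerm a (c j) \<and> q j \<in> G"
    using 1(1) 2(1) by (auto simp: c_def q_def)
  have s: "(\<Sum>j<N1+N2. c j z * q j z) = (\<Sum>j<N1. c1 j z * q1 j z) + (\<Sum>j<N2. c2 j z * q2 j z)" for z
    by (simp add: sum_lessThan_add c_def q_def)
  obtain U where U: "open U" "a \<in> U" "\<forall>z\<in>U \<inter> S. f z = (\<Sum>j<N1. c1 j z * q1 j z)"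
    using 1(2) unfolding germ_eq_def by blast
  obtain V where V: "open V" "a \<in> V" "\<forall>z\<in>V \<inter> S. g z = (\<Sum>j<N2. c2 j z * q2 j z)"
    using 2(2) unfolding germ_eq_def by blast
  have "germ_eq S a (\<lambda>z. f z + g z) (\<lambda>z. \<Sum>j<N1+N2. c j z * q j z)"
    by (rule germ_eqI[of "U \<inter> V"]) (use U V s in auto)
  then show ?thesis unfolding ideal_gen_def using cq 1(3) 2(3) by blast
qed

lemma IG_smult:
  assumes "ogerm a c" "f \<in> ideal_gen S a G"
  shows "(\<lambda>z. c z * f z) \<in> ideal_gen S a G"
proof -
  obtain N :: nat and c1 q1 where 1: "\<forall>j<N. ogerm a (c1 j) \<and> q1 j \<in> G" "germ_eq S a f (\<lambda>z. \<Sum>j<N. c1 j z * q1 j z)" "ogerm a f"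
    using assms(2) by (rule IG_D)
  obtain U where U: "open U" "a \<in> U" "\<forall>z\<in>U \<inter> S. f z = (\<Sum>j<N. c1 j z * q1 j z)"
    using 1(2) unfolding germ_eq_def by blast
  have "germ_eq S a (\<lambda>z. c z * f z) (\<lambda>z. \<Sum>j<N. (\<lambda>z. c z * c1 j z) z * q1 j z)"
    by (rule germ_eqI[of U]) (use U in \<open>auto simp: sum_distrib_left mult.assoc\<close>)
  moreover have "\<forall>j<N. ogerm a (\<lambda>z. c z * c1 j z) \<and> q1 j \<in> G" using 1(1) assms(1) by auto
  ultimately show ?thesis unfolding ideal_gen_def mem_Collect_eq using assms(1) 1(3)
    by (intro conjI ogerm_mult exI[of _ N] exI[of _ "\<lambda>j z. c z * c1 j z"] exI[of _ q1]) auto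
qed

lemma IG_sum:
  assumes "finite T" "\<And>i. i \<in> T \<Longrightarrow> f i \<in> ideal_gen S a G"
  shows "(\<lambda>z. \<Sum>i\<in>T. f i z) \<in> ideal_gen S a G"
  using assms by (induction T rule: finite_induct) (auto intro: IG_zero IG_add)

lemma IG_sub:
  assumes "\<And>q. q \<in> G \<Longrightarrow> q \<in> ideal_gen S a G'"
  shows "ideal_gen S a G \<subseteq> ideal_gen S a G'"
proof
  fix f assume f: "f \<in> ideal_gen S a G"
  obtain N :: nat and c q where 1: "\<forall>j<N. ogerm a (c j) \<and> q j \<in> G" "germ_eq S a f (\<lambda>z. \<Sum>j<N. c j z * q j z)" "ogerm a f"
    using f by (rule IG_D)
  have "(\<lambda>z. \<Sum>j<N. c j z * q j z) \<in> ideal_gen S a G'"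
    by (rule IG_sum) (use 1(1) assms in \<open>auto intro!: IG_smult\<close>)
  then show "f \<in> ideal_gen S a G'" using IG_germ 1 by blast
qed

lemma IM_prod:
  assumes "f \<in> I" "g \<in> J" "ogerm a (\<lambda>z. f z * g z)"
  shows "(\<lambda>z. f z * g z) \<in> ideal_mult S a I J"
  unfolding ideal_mult_def using assms by (auto intro!: IG_gen)




lemma detn_det: "detn N A = Determinant.det (Matrix.mat N N (\<lambda>(i,j). A i j))"
proof -
  have "Determinant.det (Matrix.mat N N (\<lambda>(i,j). A i j)) =
    (\<Sum>p\<in>{p. p permutes {0..<N}}. of_int (sign p) * (\<Prod>i = 0..<N. Matrix.mat N N (\<lambda>(i,j). A i j) $$ (i, p i)))"
    by (rule det_def') simp
  also have "\<dots> = (\<Sum>p\<in>{p. p permutes {..<N}}. of_int (sign p) * (\<Prod>i<N. A i (p i)))"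
  proof (rule sum.cong)
    show "{p. p permutes {0..<N}} = {p. p permutes {..<N}}" by (simp add: atLeast0LessThan)
    fix p assume "p \<in> {p. p permutes {..<N}}"
    then have p: "p permutes {..<N}" by simp
    show "of_int (sign p) * (\<Prod>i = 0..<N. Matrix.mat N N (\<lambda>(i,j). A i j) $$ (i, p i)) = of_int (sign p) * (\<Prod>i<N. A i (p i))"
      by (rule arg_cong[where f="\<lambda>x. _ * x"], rule prod.cong)
         (use p permutes_in_image[OF p] in \<open>auto simp: atLeast0LessThan\<close>)
  qed
  finally show ?thesis by (simp add: detn_def)
qed

lemma detn2: "detn 2 A = A 0 0 * A 1 1 - A 0 1 * A 1 0"
proof -
  have C: "Matrix.mat 2 2 (\<lambda>(i,j). A i j) \<in> carrier_mat 2 2" by simp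
  show ?thesis
    unfolding detn_det laplace_expansion_column[OF C, of 0, simplified]
    by (simp add: cofactor_def mat_delete_def det_single numeral_2_eq_2 lessThan_Suc)
qed


lemma mat_eq_detn: "A \<in> carrier_mat n n \<Longrightarrow> Determinant.det A = detn n (\<lambda>i j. A $$ (i,j))"
proof -
  assume A: "A \<in> carrier_mat n n"
  have "A = Matrix.mat n n (\<lambda>(i,j). A $$ (i,j))" using A by (auto intro!: eq_matI)
  then show ?thesis unfolding detn_det by simp
qed

lemma detn_B_factor:
  fixes k :: nat and rw :: "nat \<Rightarrow> 'p + 'p"
  assumes k: "k \<ge> 1"
    and B: "\<And>s t. s < 2*k \<Longrightarrow> t < 2*k \<Longrightarrow> B s t = (case rw s of Inl r \<Rightarrow> (\<Sum>i<k. A1 t i * M1 i r) | Inr r \<Rightarrow> (\<Sum>i<k. A2 t i * M2 i r))"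
  shows "detn (2*k) B = detn (2*k) (\<lambda>s i. if i < k then (case rw s of Inl r \<Rightarrow> M1 i r | Inr r \<Rightarrow> 0)
                                     else (case rw s of Inl r \<Rightarrow> 0 | Inr r \<Rightarrow> M2 (i-k) r))
     * detn (2*k) (\<lambda>i t. if i < k then A1 t i else A2 t (i-k) - A1 t (i-k))"
proof -
  define n where "n = 2*k"
  define P where "P s i = (if i < k then (case rw s of Inl r \<Rightarrow> M1 i r | Inr r \<Rightarrow> 0)
                                     else (case rw s of Inl r \<Rightarrow> 0 | Inr r \<Rightarrow> M2 (i-k) r))" for s i
  define Q where "Q i t = (if i < k then A1 t i else A2 t (i-k))" for i t
  define Q' where "Q' i t = (if i < k then A1 t i else A2 t (i-k) - A1 t (i-k))" for i t
  define L where "L i i' = (if i' = i then 1 else 0) - (if k \<le> i \<and> i' = i - k then 1 else (0::complex))" for i i'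
  define Pm where "Pm = Matrix.mat n n (\<lambda>(i,j). P i j)"
  define Qm where "Qm = Matrix.mat n n (\<lambda>(i,j). Q i j)"
  define Lm' where "Lm' = Matrix.mat n n (\<lambda>(i,j). L i j)"
  have nk: "n = k + k" by (simp add: n_def)
  have PQ: "Matrix.mat n n (\<lambda>(i,j). B i j) = Pm * Qm"
  proof (rule eq_matI)
    fix s t assume st: "s < dim_row (Pm * Qm)" "t < dim_col (Pm * Qm)"
    then have s: "s < n" and t: "t < n" by (auto simp: Pm_def Qm_def)
    have "(Pm * Qm) $$ (s,t) = (\<Sum>i<n. P s i * Q i t)"
      using s t by (simp add: Pm_def Qm_def scalar_prod_def atLeast0LessThan)
    also have "\<dots> = (\<Sum>i<k. P s i * Q i t) + (\<Sum>i<k. P s (k+i) * Q (k+i) t)"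
      unfolding nk by (rule sum_lessThan_add)
    also have "\<dots> = B s t"
      using B[of s t] s t unfolding n_def
      by (cases "rw s") (simp_all add: P_def Q_def mult.commute)
    finally show "Matrix.mat n n (\<lambda>(i,j). B i j) $$ (s,t) = (Pm * Qm) $$ (s,t)" using s t by simp
  qed (auto simp: Pm_def Qm_def)
  have LQ: "Matrix.mat n n (\<lambda>(i,j). Q' i j) = Lm' * Qm"
  proof (rule eq_matI)
    fix i t assume st: "i < dim_row (Lm' * Qm)" "t < dim_col (Lm' * Qm)"
    then have i: "i < n" and t: "t < n" by (auto simp: Lm'_def Qm_def)
    have "(Lm' * Qm) $$ (i,t) = (\<Sum>i'<n. L i i' * Q i' t)"
      using i t by (simp add: Lm'_def Qm_def scalar_prod_def atLeast0LessThan)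
    also have "\<dots> = (\<Sum>i'<n. (if i' = i then Q i' t else 0)) - (\<Sum>i'<n. (if k \<le> i \<and> i' = i - k then Q i' t else 0))"
    proof -
      have "(\<Sum>i'<n. L i i' * Q i' t) = (\<Sum>i'<n. (if i' = i then Q i' t else 0) - (if k \<le> i \<and> i' = i - k then Q i' t else 0))"
        by (rule sum.cong) (auto simp: L_def left_diff_distrib)
      then show ?thesis by (simp only: sum_subtractf)
    qed
    also have "\<dots> = Q' i t"
      using i k by (auto simp: Q_def Q'_def n_def)
    finally show "Matrix.mat n n (\<lambda>(i,j). Q' i j) $$ (i,t) = (Lm' * Qm) $$ (i,t)" using i t by simp
  qed (auto simp: Lm'_def Qm_def)
  have detL: "Determinant.det Lm' = 1"
  proof -
    have "Determinant.det Lm' = prod_list (diag_mat Lm')"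
      by (rule det_lower_triangular[of n]) (auto simp: Lm'_def L_def)
    also have "diag_mat Lm' = map (\<lambda>i. 1) [0..<n]"
      unfolding diag_mat_def using k by (auto simp: Lm'_def L_def)
    also have "prod_list (map (\<lambda>i. 1::complex) [0..<n]) = 1" by (induction n) auto
    finally show ?thesis .
  qed
  have cP: "Pm \<in> carrier_mat n n" and cQ: "Qm \<in> carrier_mat n n" and cL: "Lm' \<in> carrier_mat n n"
    by (auto simp: Pm_def Qm_def Lm'_def)
  have "detn n B = Determinant.det Pm * Determinant.det Qm"
    unfolding detn_det PQ by (rule det_mult[OF cP cQ])
  moreover have "detn n Q' = Determinant.det Qm"
    unfolding detn_det LQ det_mult[OF cL cQ] detL by simp
  ultimately show ?thesis unfolding n_def[symmetric] detn_det Pm_def Q'_def P_def by simp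
qed


definition Pblk :: "nat \<Rightarrow> (nat \<Rightarrow> 'p + 'p) \<Rightarrow> (nat \<Rightarrow> 'p \<Rightarrow> complex) \<Rightarrow> (nat \<Rightarrow> 'p \<Rightarrow> complex) \<Rightarrow> nat \<Rightarrow> nat \<Rightarrow> complex" where
  "Pblk k rw M1 M2 s i = (if i < k then (case rw s of Inl r \<Rightarrow> M1 i r | Inr r \<Rightarrow> 0)
                                     else (case rw s of Inl r \<Rightarrow> 0 | Inr r \<Rightarrow> M2 (i-k) r))"

lemma detn_Pblk_zero:
  assumes c: "card {s\<in>{..<2*k}. isl (rw s)} \<noteq> k"
  shows "detn (2*k) (Pblk k rw M1 M2) = 0"
  unfolding detn_def
proof (rule sum.neutral, rule ballI)
  fix \<pi> assume "\<pi> \<in> {\<pi>. \<pi> permutes {..<2*k}}"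
  then have p: "\<pi> permutes {..<2*k}" by simp
  define S1 where "S1 = {s\<in>{..<2*k}. isl (rw s)}"
  define S2 where "S2 = {s\<in>{..<2*k}. \<not> isl (rw s)}"
  have injp: "inj_on \<pi> A" for A using p permutes_inj inj_on_subset by blast
  have S12: "S2 = {..<2*k} - S1" by (auto simp: S1_def S2_def)
  have "\<exists>s<2*k. Pblk k rw M1 M2 s (\<pi> s) = 0"
  proof (cases "card S1 > k")
    case True
    have "\<not> \<pi> ` S1 \<subseteq> {..<k}"
    proof
      assume "\<pi> ` S1 \<subseteq> {..<k}"
      then have "card (\<pi> ` S1) \<le> k" using card_mono[of "{..<k}"] by fastforce
      moreover have "card (\<pi> ` S1) = card S1" using card_image[OF injp] by blast
      ultimately show False using True by simp
    qed
    then obtain s where s: "s \<in> S1" "\<not> \<pi> s < k" by (auto simp: image_subset_iff)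
    then show ?thesis by (intro exI[of _ s]) (auto simp: S1_def Pblk_def split: sum.splits)
  next
    case False
    then have lt: "card S1 < k" using c by (simp add: S1_def)
    have "card S2 = 2*k - card S1" unfolding S12 by (subst card_Diff_subset) (auto simp: S1_def)
    then have c2: "card S2 > k" using lt by simp
    have "\<not> \<pi> ` S2 \<subseteq> {k..<2*k}"
    proof
      assume "\<pi> ` S2 \<subseteq> {k..<2*k}"
      then have "card (\<pi> ` S2) \<le> k" using card_mono[of "{k..<2*k}"] by fastforce
      moreover have "card (\<pi> ` S2) = card S2" using card_image[OF injp] by blast
      ultimately show False using c2 by simp
    qed
    then obtain s where s: "s \<in> S2" "\<not> (k \<le> \<pi> s \<and> \<pi> s < 2*k)" by (auto simp: image_subset_iff)
    have "\<pi> s < 2*k" using permutes_in_image[OF p] s(1) by (auto simp: S2_def)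
    then have "\<pi> s < k" using s(2) by simp
    then show ?thesis using s(1) by (intro exI[of _ s]) (auto simp: S2_def Pblk_def split: sum.splits)
  qed
  then show "of_int (sign \<pi>) * (\<Prod>i<2*k. Pblk k rw M1 M2 i (\<pi> i)) = 0"
    by (auto intro: prod_zero)
qed

lemma detn_Pblk:
  assumes p: "\<sigma> permutes {..<2*k}"
    and l: "\<And>s. s < k \<Longrightarrow> isl (rw (\<sigma> s))"
    and r: "\<And>s. s < k \<Longrightarrow> \<not> isl (rw (\<sigma> (k+s)))"
  shows "detn (2*k) (Pblk k rw M1 M2) = of_int (sign \<sigma>) *
      detn k (\<lambda>s i. M1 i (projl (rw (\<sigma> s)))) * detn k (\<lambda>s i. M2 i (projr (rw (\<sigma> (k+s)))))"
proof -
  define n where "n = 2*k"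
  define Pm where "Pm = Matrix.mat n n (\<lambda>(i,j). Pblk k rw M1 M2 i j)"
  define T where "T = Matrix.mat k k (\<lambda>(s,i). M1 i (projl (rw (\<sigma> s))))"
  define Bt where "Bt = Matrix.mat k k (\<lambda>(s,i). M2 i (projr (rw (\<sigma> (k+s)))))"
  have cP: "Pm \<in> carrier_mat n n" by (simp add: Pm_def)
  have p': "\<sigma> permutes {0..<n}" using p by (simp add: n_def atLeast0LessThan)
  have sig: "\<sigma> s < n" if "s < n" for s using permutes_in_image[OF p'] that by simp
  have eq: "Matrix.mat n n (\<lambda>(i,j). Pm $$ (\<sigma> i, j)) = four_block_mat T (0\<^sub>m k k) (0\<^sub>m k k) Bt"
  proof (rule eq_matI)
    fix i j assume ij: "i < dim_row (four_block_mat T (0\<^sub>m k k) (0\<^sub>m k k) Bt)" "j < dim_col (four_block_mat T (0\<^sub>m k k) (0\<^sub>m k k) Bt)"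
    then have i: "i < n" and j: "j < n" by (auto simp: T_def Bt_def n_def)
    have lhs: "Matrix.mat n n (\<lambda>(i,j). Pm $$ (\<sigma> i, j)) $$ (i,j) = Pblk k rw M1 M2 (\<sigma> i) j"
      using i j sig[OF i] by (simp add: Pm_def)
    show "Matrix.mat n n (\<lambda>(i,j). Pm $$ (\<sigma> i, j)) $$ (i,j) = four_block_mat T (0\<^sub>m k k) (0\<^sub>m k k) Bt $$ (i,j)"
    proof (cases "i < k")
      case True
      then obtain r where "rw (\<sigma> i) = Inl r" using l[OF True] by (cases "rw (\<sigma> i)") auto
      then show ?thesis unfolding lhs using True i j by (auto simp: T_def Bt_def Pblk_def n_def)
    next
      case False
      then have "i - k < k" "k + (i - k) = i" using i by (auto simp: n_def)
      then obtain r where "rw (\<sigma> i) = Inr r" using r[of "i-k"] by (cases "rw (\<sigma> i)") auto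
      then show ?thesis unfolding lhs using False i j by (auto simp: T_def Bt_def Pblk_def n_def)
    qed
  qed (auto simp: T_def Bt_def n_def)
  have fb: "Determinant.det (four_block_mat T (0\<^sub>m k k) (0\<^sub>m k k) Bt) = Determinant.det T * Determinant.det Bt"
    by (rule det_four_block_mat_upper_right_zero) (auto simp: T_def Bt_def)
  have "of_int (sign \<sigma>) * Determinant.det Pm = Determinant.det T * Determinant.det Bt"
    using det_permute_rows[OF cP p'] eq fb by simp
  moreover have "of_int (sign \<sigma>) * of_int (sign \<sigma>) = (1::complex)"
    by (simp add: sign_def)
  ultimately have "Determinant.det Pm = of_int (sign \<sigma>) * (Determinant.det T * Determinant.det Bt)"
    by (metis mult.assoc mult_1)
  then show ?thesis unfolding detn_det n_def[symmetric] Pm_def T_def Bt_def by (simp add: mult.assoc)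
qed




lemma detn_cong: "(\<And>s t. s < N \<Longrightarrow> t < N \<Longrightarrow> A s t = A' s t) \<Longrightarrow> detn N A = detn N A'"
  unfolding detn_def
  by (rule sum.cong[OF refl], rule arg_cong[where f="\<lambda>x. _ * x"], rule prod.cong[OF refl])
     (auto dest: permutes_in_image)

lemma ogerm_detn:
  assumes "\<And>s t. s < N \<Longrightarrow> t < N \<Longrightarrow> ogerm a (E s t)"
  shows "ogerm a (\<lambda>z. detn N (\<lambda>s t. E s t z))"
  unfolding detn_def
proof (rule ogerm_sum)
  show "finite {\<pi>. \<pi> permutes {..<N}}" by (rule finite_permutations) simp
  fix \<pi> assume "\<pi> \<in> {\<pi>. \<pi> permutes {..<N}}"
  then have p: "\<pi> permutes {..<N}" by simp
  have "ogerm a (\<lambda>z. \<Prod>i<N. E i (\<pi> i) z)"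
    by (rule ogerm_prod) (use assms permutes_in_image[OF p] in auto)
  then show "ogerm a (\<lambda>z. of_int (sign \<pi>) * (\<Prod>i<N. E i (\<pi> i) z))" by (intro ogerm_mult ogerm_const)
qed

lemma exists_sigma:
  fixes rw :: "nat \<Rightarrow> 'p + 'p"
  assumes c: "card {s\<in>{..<2*k}. isl (rw s)} = k"
  shows "\<exists>\<sigma>. \<sigma> permutes {..<2*k} \<and> (\<forall>s<k. isl (rw (\<sigma> s))) \<and> (\<forall>s<k. \<not> isl (rw (\<sigma> (k+s))))"
proof -
  define S1 where "S1 = {s\<in>{..<2*k}. isl (rw s)}"
  define S2 where "S2 = {s\<in>{..<2*k}. \<not> isl (rw s)}"
  have S12: "S2 = {..<2*k} - S1" by (auto simp: S1_def S2_def)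
  have c1: "card S1 = k" using c by (simp add: S1_def)
  have c2: "card S2 = k" unfolding S12 using c1 by (subst card_Diff_subset) (auto simp: S1_def)
  obtain f1 where f1: "bij_betw f1 {0..<k} S1" using ex_bij_betw_nat_finite[of S1] c1 by (auto simp: S1_def)
  obtain f2 where f2: "bij_betw f2 {0..<k} S2" using ex_bij_betw_nat_finite[of S2] c2 by (auto simp: S2_def)
  define \<sigma> where "\<sigma> s = (if s < k then f1 s else if s < 2*k then f2 (s - k) else s)" for s
  have im1: "f1 s \<in> S1" if "s < k" for s using f1 that by (auto simp: bij_betw_def)
  have im2: "f2 s \<in> S2" if "s < k" for s using f2 that by (auto simp: bij_betw_def)
  have sub: "\<sigma> ` {..<2*k} \<subseteq> {..<2*k}"
  proof
    fix y assume "y \<in> \<sigma> ` {..<2*k}"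
    then obtain s where s: "s < 2*k" "y = \<sigma> s" by auto
    show "y \<in> {..<2*k}"
    proof (cases "s < k")
      case True then show ?thesis using im1[OF True] s by (auto simp: \<sigma>_def S1_def)
    next
      case False then have "s - k < k" using s by auto
      then show ?thesis using im2 s False by (auto simp: \<sigma>_def S2_def)
    qed
  qed
  have inj: "inj_on \<sigma> {..<2*k}"
  proof (rule inj_onI)
    fix s s' assume s: "s \<in> {..<2*k}" and s': "s' \<in> {..<2*k}" and eq: "\<sigma> s = \<sigma> s'"
    have i1: "inj_on f1 {0..<k}" and i2: "inj_on f2 {0..<k}" using f1 f2 by (auto simp: bij_betw_def)
    show "s = s'"
    proof (cases "s < k"; cases "s' < k")
      assume "s < k" "s' < k" then show ?thesis using eq i1 by (auto simp: \<sigma>_def inj_on_def)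
    next
      assume a: "s < k" "\<not> s' < k"
      then have "\<sigma> s \<in> S1" "\<sigma> s' \<in> S2" using im1 im2[of "s' - k"] s' by (auto simp: \<sigma>_def)
      then show ?thesis using eq by (auto simp: S1_def S2_def)
    next
      assume a: "\<not> s < k" "s' < k"
      then have "\<sigma> s \<in> S2" "\<sigma> s' \<in> S1" using im1 im2[of "s - k"] s by (auto simp: \<sigma>_def)
      then show ?thesis using eq by (auto simp: S1_def S2_def)
    next
      assume a: "\<not> s < k" "\<not> s' < k"
      then have "f2 (s - k) = f2 (s' - k)" using eq s s' by (auto simp: \<sigma>_def)
      then have "s - k = s' - k" using i2 a s s' by (auto simp: inj_on_def)
      then show ?thesis using a by simp
    qed
  qed
  have "\<sigma> ` {..<2*k} = {..<2*k}" by (rule endo_inj_surj[OF _ sub inj]) simp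
  then have "bij_betw \<sigma> {..<2*k} {..<2*k}" using inj by (simp add: bij_betw_def)
  then have p: "\<sigma> permutes {..<2*k}" by (rule bij_imp_permutes) (simp add: \<sigma>_def)
  have "\<forall>s<k. isl (rw (\<sigma> s))" using im1 by (auto simp: \<sigma>_def S1_def)
  moreover have "\<forall>s<k. \<not> isl (rw (\<sigma> (k+s)))" using im2 by (auto simp: \<sigma>_def S2_def)
  ultimately show ?thesis using p by blast
qed

lemma IDelta_gen: "(\<lambda>w. pi1 w $ l - pi2 w $ l) \<in> I_Delta X x"
  unfolding I_Delta_def
  by (rule IG_gen) (auto intro!: ogerm_diff ogerm_pi1[OF ogerm_coord] ogerm_pi2[OF ogerm_coord])

lemma ogerm_dgen: "ogerm (dpt x) (\<lambda>w. pi1 w $ l - pi2 w $ l)"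
  by (auto intro!: ogerm_diff ogerm_pi1[OF ogerm_coord] ogerm_pi2[OF ogerm_coord])

lemma pow_prod: "(\<lambda>w. \<Prod>s<j. (pi1 w $ L s - pi2 w $ L s)) \<in> ideal_pow (XX X) (dpt x) (I_Delta X x) j"
proof (induction j)
  case 0
  show ?case by (simp, rule IG_gen) auto
next
  case (Suc j)
  have o: "ogerm (dpt x) (\<lambda>w. (\<Prod>s<j. (pi1 w $ L s - pi2 w $ L s)) * (pi1 w $ L j - pi2 w $ L j))"
    by (intro ogerm_mult ogerm_prod ogerm_dgen) auto
  show ?case
    using IM_prod[OF Suc IDelta_gen o] by simp
qed


lemma prod_lessThan_add: "(\<Prod>j<n1+n2. f j) = (\<Prod>j<n1. f j) * (\<Prod>j<(n2::nat). f (n1 + j))"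
  by (induction n2) (auto simp: add.assoc mult.assoc)

lemma minor2_in:
  assumes "F \<in> I" "G \<in> I"
  shows "(\<lambda>w. F (pi1 w) * G (pi2 w) - G (pi1 w) * F (pi2 w)) \<in> minors 2 (Dset (ideal_vecs I))"
  unfolding minors_def mem_Collect_eq
proof (intro exI conjI)
  let ?col = "\<lambda>t::nat. if t = 0 then Dvec (\<lambda>_::unit. F) else Dvec (\<lambda>_::unit. G)"
  let ?rw = "\<lambda>s::nat. if s = 0 then Inl () else Inr ()"
  show "\<forall>t<2. ?col t \<in> Dset (ideal_vecs I)"
    using assms by (auto simp: Dset_def ideal_vecs_def)
  show "inj_on ?rw {..<2}" by (auto simp: inj_on_def)
  show "(\<lambda>w. F (pi1 w) * G (pi2 w) - G (pi1 w) * F (pi2 w)) = (\<lambda>z. detn 2 (\<lambda>s t. ?col t (?rw s) z))"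
    by (simp add: detn2 Dvec_def)
qed

lemma EL_in:
  fixes F G :: "complex^'n \<Rightarrow> complex"
  assumes F: "F \<in> I_minors X x k N" and G: "G \<in> I_minors X x k N"
  shows "(\<lambda>w. (pi1 w $ l - pi2 w $ l) * (F (pi1 w) * G (pi2 w))) \<in>
     I_minors (XX X) (dpt x) 2 (Dset (ideal_vecs (I_minors X x k N)))"
proof -
  let ?I = "I_minors X x k N"
  define c where "c z = - (z $ l)" for z :: "complex^'n"
  have oc: "ogerm x c" unfolding c_def by (intro ogerm_neg ogerm_coord)
  have G': "(\<lambda>z. c z * G z) \<in> ?I" using G unfolding I_minors_def by (rule IG_smult[OF oc])
  have oF: "ogerm x F" "ogerm x G" "ogerm x (\<lambda>z. c z * G z)"
    using F G G' unfolding I_minors_def by (auto dest: IG_ogerm)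
  define M1 where "M1 w = F (pi1 w) * (\<lambda>z. c z * G z) (pi2 w) - (\<lambda>z. c z * G z) (pi1 w) * F (pi2 w)" for w
  define M2 where "M2 w = F (pi1 w) * G (pi2 w) - G (pi1 w) * F (pi2 w)" for w
  have m1: "M1 \<in> minors 2 (Dset (ideal_vecs ?I))" unfolding M1_def by (rule minor2_in[OF F G'])
  have m2: "M2 \<in> minors 2 (Dset (ideal_vecs ?I))" unfolding M2_def by (rule minor2_in[OF F G])
  have o1: "ogerm (dpt x) M1" unfolding M1_def
    using oF oc by (intro ogerm_diff ogerm_mult ogerm_pi1 ogerm_pi2) auto
  have o2: "ogerm (dpt x) M2" unfolding M2_def
    using oF by (intro ogerm_diff ogerm_mult ogerm_pi1 ogerm_pi2) auto
  have oc1: "ogerm (dpt x) (\<lambda>w. - c (pi1 w))" using oc by (intro ogerm_neg ogerm_pi1)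
  have "(\<lambda>w. M1 w + (- c (pi1 w)) * M2 w) \<in> I_minors (XX X) (dpt x) 2 (Dset (ideal_vecs ?I))"
    unfolding I_minors_def[of "XX X" "dpt x" 2]
    by (rule IG_add[OF IG_gen[OF m1 o1] IG_smult[OF oc1 IG_gen[OF m2 o2]]])
  moreover have "(\<lambda>w. M1 w + (- c (pi1 w)) * M2 w) = (\<lambda>w. (pi1 w $ l - pi2 w $ l) * (F (pi1 w) * G (pi2 w)))"
    by (rule ext) (simp add: M1_def M2_def c_def algebra_simps)
  ultimately show ?thesis by simp
qed

lemma m_in_span:
  fixes m :: "nat \<Rightarrow> 'p \<Rightarrow> complex^'n \<Rightarrow> complex"
  assumes li: "lin_indep_germs X x k m" and t: "t < k"
  shows "m t \<in> span_mod X x k m"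
proof -
  define a where "a = (\<lambda>i (z::complex^'n). if i = t then (1::complex) else 0)"
  have 1: "\<forall>r. ogerm x (m t r)" using li t by (simp add: lin_indep_germs_def)
  have 2: "\<forall>i<k. ogerm x (a i)" by (auto simp: a_def)
  have eq: "(\<lambda>z. \<Sum>i<k. a i z * m i r z) = m t r" for r
  proof
    fix z
    have "(\<Sum>i<k. a i z * m i r z) = (\<Sum>i<k. if i = t then m i r z else 0)"
      by (rule sum.cong) (auto simp: a_def)
    then show "(\<Sum>i<k. a i z * m i r z) = m t r z" using t by simp
  qed
  have 3: "\<forall>r. germ_eq X x (m t r) (\<lambda>z. \<Sum>i<k. a i z * m i r z)"
    unfolding eq by (simp add: germ_eq_refl)
  show ?thesis unfolding span_mod_def using 1 2 3 by blast
qed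

lemma Fminor:
  assumes li: "lin_indep_germs X x k m" and inj: "inj_on rw1 {..<k}"
  shows "(\<lambda>z. detn k (\<lambda>s i. m i (rw1 s) z)) \<in> I_minors X x k (span_mod X x k m)"
  unfolding I_minors_def
proof (rule IG_gen)
  show "(\<lambda>z. detn k (\<lambda>s i. m i (rw1 s) z)) \<in> minors k (span_mod X x k m)"
    unfolding minors_def using m_in_span[OF li] inj by blast
  show "ogerm x (\<lambda>z. detn k (\<lambda>s i. m i (rw1 s) z))"
    by (rule ogerm_detn) (use li in \<open>auto simp: lin_indep_germs_def\<close>)
qed


lemma detn_B_Pblk:
  fixes k :: nat and rw :: "nat \<Rightarrow> 'p + 'p"
  assumes k: "k \<ge> 1"
    and B: "\<And>s t. s < 2*k \<Longrightarrow> t < 2*k \<Longrightarrow> B s t = (case rw s of Inl r \<Rightarrow> (\<Sum>i<k. A1 t i * M1 i r) | Inr r \<Rightarrow> (\<Sum>i<k. A2 t i * M2 i r))"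
  shows "detn (2*k) B = detn (2*k) (Pblk k rw M1 M2)
     * detn (2*k) (\<lambda>i t. if i < k then A1 t i else A2 t (i-k) - A1 t (i-k))"
proof -
  have "Pblk k rw M1 M2 = (\<lambda>s i. if i < k then (case rw s of Inl r \<Rightarrow> M1 i r | Inr r \<Rightarrow> 0)
                                     else (case rw s of Inl r \<Rightarrow> 0 | Inr r \<Rightarrow> M2 (i-k) r))"
    by (intro ext) (simp add: Pblk_def)
  then show ?thesis using detn_B_factor[OF k B] by simp
qed

lemma XX_pi: "w \<in> XX X \<Longrightarrow> pi1 w \<in> X \<and> pi2 w \<in> X"
  by (simp add: XX_def)

lemma minor_RHS:
  fixes X :: "(complex^'n) set" and x :: "complex^'n" and k :: nat
    and m :: "nat \<Rightarrow> 'p::finite \<Rightarrow> complex^'n \<Rightarrow> complex"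
    and h :: "nat \<Rightarrow> 'p \<Rightarrow> complex^'n \<Rightarrow> complex" and rw :: "nat \<Rightarrow> 'p + 'p"
  assumes k: "k \<ge> 1" and li: "lin_indep_germs X x k m"
    and hM: "\<And>t. t < 2*k \<Longrightarrow> h t \<in> span_mod X x k m"
    and inj: "inj_on rw {..<2*k}"
  shows "(\<lambda>w. detn (2*k) (\<lambda>s t. Dvec (h t) (rw s) w)) \<in> ideal_mult (XX X) (dpt x)
         (ideal_pow (XX X) (dpt x) (I_Delta X x) (k - 1))
         (I_minors (XX X) (dpt x) 2 (Dset (ideal_vecs (I_minors X x k (span_mod X x k m)))))"
    (is "?q \<in> ?R")
proof -
  have exA: "\<forall>t. \<exists>a. t < 2*k \<longrightarrow> (\<forall>i<k. ogerm x (a i)) \<and> (\<forall>r. germ_eq X x (h t r) (\<lambda>z. \<Sum>i<k. a i z * m i r z))"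
    using hM unfolding span_mod_def by blast
  obtain A where A: "\<And>t. t < 2*k \<Longrightarrow> (\<forall>i<k. ogerm x (A t i)) \<and> (\<forall>r. germ_eq X x (h t r) (\<lambda>z. \<Sum>i<k. A t i z * m i r z))"
    using choice[OF exA] by blast
  have hog: "ogerm x (h t r)" if "t < 2*k" for t r using hM[OF that] unfolding span_mod_def by blast
  obtain U1 where U1: "open U1" "x \<in> U1"
    "\<forall>p\<in>{..<2*k} \<times> UNIV. \<forall>z\<in>U1 \<inter> X. h (fst p) (snd p) z = (\<Sum>i<k. A (fst p) i z * m i (snd p) z)"
    using germ_eq_finite[of "{..<2*k} \<times> (UNIV::'p set)" X x "\<lambda>p. h (fst p) (snd p)" "\<lambda>p z. \<Sum>i<k. A (fst p) i z * m i (snd p) z"] A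
    by auto
  have exV: "\<forall>p. \<exists>Vb. (fst p < 2*k \<and> snd p < k) \<longrightarrow> (open (fst Vb) \<and> dpt x \<in> fst Vb \<and> (\<forall>l. holo_on (snd Vb l) (fst Vb)) \<and>
     (\<forall>w\<in>fst Vb. A (fst p) (snd p) (pi2 w) - A (fst p) (snd p) (pi1 w) = (\<Sum>l\<in>UNIV. (pi1 w $ l - pi2 w $ l) * snd Vb l w)))"
  proof
    fix p :: "nat \<times> nat"
    show "\<exists>Vb. (fst p < 2*k \<and> snd p < k) \<longrightarrow> (open (fst Vb) \<and> dpt x \<in> fst Vb \<and> (\<forall>l. holo_on (snd Vb l) (fst Vb)) \<and>
     (\<forall>w\<in>fst Vb. A (fst p) (snd p) (pi2 w) - A (fst p) (snd p) (pi1 w) = (\<Sum>l\<in>UNIV. (pi1 w $ l - pi2 w $ l) * snd Vb l w)))"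
    proof (cases "fst p < 2*k \<and> snd p < k")
      case True
      then have "ogerm x (A (fst p) (snd p))" using A by blast
      from hadamard[OF this] obtain V b where "open V \<and> dpt x \<in> V \<and> (\<forall>l. holo_on (b l) V) \<and>
        (\<forall>w\<in>V. A (fst p) (snd p) (pi2 w) - A (fst p) (snd p) (pi1 w) = (\<Sum>l\<in>UNIV. (pi1 w $ l - pi2 w $ l) * b l w))"
        by blast
      then show ?thesis by (intro exI[of _ "(V, b)"]) simp
    qed blast
  qed
  obtain VB where VB: "\<And>p. fst p < 2*k \<Longrightarrow> snd p < k \<Longrightarrow> open (fst (VB p)) \<and> dpt x \<in> fst (VB p) \<and> (\<forall>l. holo_on (snd (VB p) l) (fst (VB p))) \<and>
     (\<forall>w\<in>fst (VB p). A (fst p) (snd p) (pi2 w) - A (fst p) (snd p) (pi1 w) = (\<Sum>l\<in>UNIV. (pi1 w $ l - pi2 w $ l) * snd (VB p) l w))"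
    using choice[OF exV] by blast
  define V where "V t i = fst (VB (t,i))" for t i
  define b where "b t i = snd (VB (t,i))" for t i
  have Vo: "open (V t i)" "dpt x \<in> V t i" "holo_on (b t i l) (V t i)" if "t < 2*k" "i < k" for t i l
    using VB[of "(t,i)"] that by (auto simp: V_def b_def)
  have Vh: "A t i (pi2 w) - A t i (pi1 w) = (\<Sum>l\<in>UNIV. (pi1 w $ l - pi2 w $ l) * b t i l w)"
    if "t < 2*k" "i < k" "w \<in> V t i" for t i w
    using VB[of "(t,i)"] that by (auto simp: V_def b_def)
  have bog: "ogerm (dpt x) (b t i l)" if "t < 2*k" "i < k" for t i l
    using Vo[OF that] by (auto intro: ogerm_holo)
  define W where "W = (\<Inter>p\<in>{..<2*k} \<times> {..<k}. V (fst p) (snd p)) \<inter> pi1 -` U1 \<inter> pi2 -` U1"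
  have oW: "open W" unfolding W_def
    by (intro open_Int open_INT open_vimage linear_continuous_on bl_pi1 bl_pi2 U1(1)) (auto intro: Vo)
  have xW: "dpt x \<in> W" unfolding W_def using Vo U1(2) by auto
  have WV: "w \<in> V t i" if "w \<in> W" "t < 2*k" "i < k" for w t i using that by (auto simp: W_def)
  have oq: "ogerm (dpt x) ?q"
  proof (rule ogerm_detn)
    fix s t assume st: "s < 2*k" "t < 2*k"
    show "ogerm (dpt x) (Dvec (h t) (rw s))"
      using hog[OF st(2)] by (cases "rw s") (auto simp: Dvec_def intro: ogerm_pi1 ogerm_pi2)
  qed
  define Qd where "Qd w = detn (2*k) (\<lambda>i t. if i < k then A t i (pi1 w) else A t (i-k) (pi2 w) - A t (i-k) (pi1 w))" for w
  have fac: "?q w = detn (2*k) (Pblk k rw (\<lambda>i r. m i r (pi1 w)) (\<lambda>i r. m i r (pi2 w))) * Qd w"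
    if w: "w \<in> W" "w \<in> XX X" for w
  proof -
    have p1: "pi1 w \<in> U1 \<inter> X" "pi2 w \<in> U1 \<inter> X" using w XX_pi[of w X] by (auto simp: W_def)
    show ?thesis unfolding Qd_def
    proof (rule detn_B_Pblk[OF k])
      fix s t assume st: "s < 2*k" "t < 2*k"
      show "Dvec (h t) (rw s) w = (case rw s of Inl r \<Rightarrow> \<Sum>i<k. A t i (pi1 w) * m i r (pi1 w) | Inr r \<Rightarrow> \<Sum>i<k. A t i (pi2 w) * m i r (pi2 w))"
        using U1(3) st p1 by (cases "rw s") (auto simp: Dvec_def)
    qed
  qed
  show ?thesis
  proof (cases "card {s\<in>{..<2*k}. isl (rw s)} = k")
    case False
    have "germ_eq (XX X) (dpt x) ?q (\<lambda>w. 0)"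
    proof (rule germ_eqI[OF oW xW])
      fix w assume "w \<in> W" "w \<in> XX X"
      then show "?q w = 0" using fac detn_Pblk_zero[OF False] by simp
    qed
    then show ?thesis unfolding ideal_mult_def using IG_germ[OF oq IG_zero] by blast
  next
    case True
    from exists_sigma[OF True] obtain \<sigma> where sig: "\<sigma> permutes {..<2*k}" "\<forall>s<k. isl (rw (\<sigma> s))" "\<forall>s<k. \<not> isl (rw (\<sigma> (k+s)))"
      by blast
    define rw1 where "rw1 s = projl (rw (\<sigma> s))" for s
    define rw2 where "rw2 s = projr (rw (\<sigma> (k+s)))" for s
    have sin: "\<sigma> s < 2*k" if "s < 2*k" for s using permutes_in_image[OF sig(1)] that by simp
    have sinj: "inj_on \<sigma> A" for A using permutes_inj[OF sig(1)] inj_on_subset by blast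
    have inj1: "inj_on rw1 {..<k}"
    proof (rule inj_onI)
      fix s s' assume a: "s \<in> {..<k}" "s' \<in> {..<k}" "rw1 s = rw1 s'"
      have "rw (\<sigma> s) = Inl (rw1 s)" "rw (\<sigma> s') = Inl (rw1 s')"
        using a(1,2) sig(2) unfolding rw1_def by (simp_all add: sum.collapse(1))
      then have "rw (\<sigma> s) = rw (\<sigma> s')" using a(3) by simp
      then have "\<sigma> s = \<sigma> s'" using inj sin a by (auto simp: inj_on_def)
      then show "s = s'" by (rule injD[OF permutes_inj[OF sig(1)]])
    qed
    have inj2: "inj_on rw2 {..<k}"
    proof (rule inj_onI)
      fix s s' assume a: "s \<in> {..<k}" "s' \<in> {..<k}" "rw2 s = rw2 s'"
      have "rw (\<sigma> (k+s)) = Inr (rw2 s)" "rw (\<sigma> (k+s')) = Inr (rw2 s')"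
        using a(1,2) sig(3) unfolding rw2_def by (simp_all add: sum.collapse(2))
      then have "rw (\<sigma> (k+s)) = rw (\<sigma> (k+s'))" using a(3) by simp
      then have "\<sigma> (k+s) = \<sigma> (k+s')" using inj sin a by (auto simp: inj_on_def)
      then have "k + s = k + s'" by (rule injD[OF permutes_inj[OF sig(1)]])
      then show "s = s'" by simp
    qed
    define F where "F z = detn k (\<lambda>s i. m i (rw1 s) z)" for z
    define G where "G z = detn k (\<lambda>s i. m i (rw2 s) z)" for z
    have FI: "F \<in> I_minors X x k (span_mod X x k m)"
      using Fminor[OF li inj1] by (simp add: F_def[abs_def])
    have GI: "G \<in> I_minors X x k (span_mod X x k m)"
      using Fminor[OF li inj2] by (simp add: G_def[abs_def])
    have Pval: "detn (2*k) (Pblk k rw (\<lambda>i r. m i r (pi1 w)) (\<lambda>i r. m i r (pi2 w))) = of_int (sign \<sigma>) * F (pi1 w) * G (pi2 w)" for w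
      using detn_Pblk[OF sig(1), of rw "\<lambda>i r. m i r (pi1 w)" "\<lambda>i r. m i r (pi2 w)"] sig(2,3)
      by (simp add: F_def G_def rw1_def rw2_def)
    define d where "d l w = pi1 w $ l - pi2 w $ l" for l and w :: "complex^('n+'n)"
    define Perm where "Perm = {\<pi>. \<pi> permutes {..<2*k}}"
    define PL where "PL = Pi\<^sub>E {..<k} (\<lambda>_. UNIV::'n set)"
    define Cf where "Cf \<pi> L w = of_int (sign \<sigma>) * of_int (sign \<pi>) * (\<Prod>s<k. A (\<pi> s) s (pi1 w)) * (\<Prod>s<k. b (\<pi> (k+s)) s (L s) w)"
      for \<pi> L w
    define PD where "PD L w = (\<Prod>s<k-1. d (L s) w)" for L w
    define EL where "EL L w = d (L (k-1)) w * (F (pi1 w) * G (pi2 w))" for L w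
    have Qexp: "Qd w = (\<Sum>\<pi>\<in>Perm. \<Sum>L\<in>PL. of_int (sign \<pi>) * (\<Prod>s<k. A (\<pi> s) s (pi1 w)) *
        ((\<Prod>s<k. d (L s) w) * (\<Prod>s<k. b (\<pi> (k+s)) s (L s) w)))"
      if w: "w \<in> W" for w
      unfolding Qd_def detn_def Perm_def
    proof (rule sum.cong[OF refl])
      fix \<pi> assume "\<pi> \<in> {\<pi>. \<pi> permutes {..<2*k}}"
      then have p: "\<pi> permutes {..<2*k}" by simp
      have pin: "\<pi> s < 2*k" if "s < 2*k" for s using permutes_in_image[OF p] that by simp
      let ?Q = "\<lambda>i t. if i < k then A t i (pi1 w) else A t (i-k) (pi2 w) - A t (i-k) (pi1 w)"
      have "(\<Prod>i<2*k. ?Q i (\<pi> i)) = (\<Prod>i<k. ?Q i (\<pi> i)) * (\<Prod>i<k. ?Q (k+i) (\<pi> (k+i)))"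
        using prod_lessThan_add[of "\<lambda>i. ?Q i (\<pi> i)" k k] by (simp add: mult_2)
      also have "(\<Prod>i<k. ?Q i (\<pi> i)) = (\<Prod>s<k. A (\<pi> s) s (pi1 w))" by (rule prod.cong) auto
      also have "(\<Prod>i<k. ?Q (k+i) (\<pi> (k+i))) = (\<Prod>s<k. \<Sum>l\<in>UNIV. d l w * b (\<pi> (k+s)) s l w)"
      proof (rule prod.cong[OF refl])
        fix s assume s: "s \<in> {..<k}"
        have "\<pi> (k+s) < 2*k" using pin s by simp
        then show "?Q (k+s) (\<pi> (k+s)) = (\<Sum>l\<in>UNIV. d l w * b (\<pi> (k+s)) s l w)"
          using Vh[of "\<pi> (k+s)" s w] WV[OF w] s by (simp add: d_def)
      qed
      also have "\<dots> = (\<Sum>L\<in>PL. \<Prod>s<k. d (L s) w * b (\<pi> (k+s)) s (L s) w)"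
        unfolding PL_def by (rule prod_sum_PiE) auto
      also have "\<dots> = (\<Sum>L\<in>PL. (\<Prod>s<k. d (L s) w) * (\<Prod>s<k. b (\<pi> (k+s)) s (L s) w))"
        by (simp add: prod.distrib)
      finally show "of_int (sign \<pi>) * (\<Prod>i<2*k. ?Q i (\<pi> i)) = (\<Sum>L\<in>PL. of_int (sign \<pi>) * (\<Prod>s<k. A (\<pi> s) s (pi1 w)) *
        ((\<Prod>s<k. d (L s) w) * (\<Prod>s<k. b (\<pi> (k+s)) s (L s) w)))"
        by (simp add: sum_distrib_left mult.assoc)
    qed
    have kk: "k = Suc (k - 1)" using k by simp
    have dsplit: "(\<Prod>s<k. d (L s) w) = PD L w * d (L (k-1)) w" for L w
      unfolding PD_def by (subst kk) (simp only: prod.lessThan_Suc diff_Suc_1)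
    define T where "T w = (\<Sum>\<pi>\<in>Perm. \<Sum>L\<in>PL. Cf \<pi> L w * (PD L w * EL L w))" for w
    have qT: "germ_eq (XX X) (dpt x) ?q T"
    proof (rule germ_eqI[OF oW xW])
      fix w assume w: "w \<in> W" "w \<in> XX X"
      have "?q w = of_int (sign \<sigma>) * F (pi1 w) * G (pi2 w) * Qd w" using fac[OF w] Pval by simp
      also have "\<dots> = T w"
        unfolding Qexp[OF w(1)] T_def sum_distrib_left
        by (intro sum.cong refl) (simp add: Cf_def EL_def dsplit mult_ac)
      finally show "?q w = T w" .
    qed
    have TR: "T \<in> ?R"
      unfolding T_def[abs_def] ideal_mult_def[of "XX X" "dpt x"]
    proof (intro IG_sum)
      show "finite Perm" unfolding Perm_def by (rule finite_permutations) simp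
      show "finite PL" unfolding PL_def by (rule finite_PiE) auto
      fix \<pi> L assume pi: "\<pi> \<in> Perm" and L: "L \<in> PL"
      have p: "\<pi> permutes {..<2*k}" using pi by (simp add: Perm_def)
      have pin: "\<pi> s < 2*k" if "s < 2*k" for s using permutes_in_image[OF p] that by simp
      have oC: "ogerm (dpt x) (Cf \<pi> L)"
        unfolding Cf_def[abs_def]
      proof (intro ogerm_mult ogerm_const ogerm_prod finite_lessThan)
        fix s assume s: "s \<in> {..<k}"
        show "ogerm (dpt x) (\<lambda>w. A (\<pi> s) s (pi1 w))"
          using A[of "\<pi> s"] pin[of s] s by (intro ogerm_pi1) auto
        show "ogerm (dpt x) (b (\<pi> (k+s)) s (L s))"
          using bog pin[of "k+s"] s by auto
      qed
      have PDI: "PD L \<in> ideal_pow (XX X) (dpt x) (I_Delta X x) (k - 1)"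
        using pow_prod[of L "k-1" X x] by (simp add: PD_def[abs_def] d_def)
      have ELI: "EL L \<in> I_minors (XX X) (dpt x) 2 (Dset (ideal_vecs (I_minors X x k (span_mod X x k m))))"
        using EL_in[OF FI GI, of "L (k-1)"] by (simp add: EL_def[abs_def] d_def)
      have oPD: "ogerm (dpt x) (PD L)" unfolding PD_def[abs_def] d_def
        by (intro ogerm_prod ogerm_dgen finite_lessThan)
      have oEL: "ogerm (dpt x) (EL L)" using ELI unfolding I_minors_def by (rule IG_ogerm)
      have oPE: "ogerm (dpt x) (\<lambda>w. PD L w * EL L w)" by (rule ogerm_mult[OF oPD oEL])
      have "(\<lambda>w. PD L w * EL L w) \<in> ideal_gen (XX X) (dpt x)
         {h. \<exists>f g. f \<in> ideal_pow (XX X) (dpt x) (I_Delta X x) (k - 1) \<and>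
            g \<in> I_minors (XX X) (dpt x) 2 (Dset (ideal_vecs (I_minors X x k (span_mod X x k m)))) \<and> h = (\<lambda>z. f z * g z)}"
        using IM_prod[OF PDI ELI oPE] unfolding ideal_mult_def .
      then show "(\<lambda>w. Cf \<pi> L w * (PD L w * EL L w)) \<in> ideal_gen (XX X) (dpt x)
         {h. \<exists>f g. f \<in> ideal_pow (XX X) (dpt x) (I_Delta X x) (k - 1) \<and>
            g \<in> I_minors (XX X) (dpt x) 2 (Dset (ideal_vecs (I_minors X x k (span_mod X x k m)))) \<and> h = (\<lambda>z. f z * g z)}"
        by (rule IG_smult[OF oC])
    qed
    show ?thesis
      using IG_germ[OF oq TR[unfolded ideal_mult_def] qT] unfolding ideal_mult_def .
  qed
qed


theorem lemma3p5:
  fixes X :: "(complex^'n) set" and x :: "complex^'n" and k :: nat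
    and m :: "nat \<Rightarrow> 'p::finite \<Rightarrow> complex^'n \<Rightarrow> complex"
  assumes "analytic_variety X" and "x \<in> X" and "k \<ge> 1"
    and "lin_indep_germs X x k m"
  shows "I_minors (XX X) (dpt x) (2*k) (Dset (span_mod X x k m))
    \<subseteq> ideal_mult (XX X) (dpt x)
         (ideal_pow (XX X) (dpt x) (I_Delta X x) (k - 1))
         (I_minors (XX X) (dpt x) 2 (Dset (ideal_vecs (I_minors X x k (span_mod X x k m)))))"
proof -
  let ?M = "span_mod X x k m"
  let ?R = "ideal_mult (XX X) (dpt x)
         (ideal_pow (XX X) (dpt x) (I_Delta X x) (k - 1))
         (I_minors (XX X) (dpt x) 2 (Dset (ideal_vecs (I_minors X x k (span_mod X x k m)))))"
  have "q \<in> ?R" if q: "q \<in> minors (2*k) (Dset ?M)" for q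
  proof -
    obtain col rw where c: "\<forall>t<2*k. col t \<in> Dset ?M" "inj_on rw {..<2*k}"
      "q = (\<lambda>z. detn (2*k) (\<lambda>s t. col t (rw s) z))"
      using q unfolding minors_def by blast
    have exH: "\<forall>t. \<exists>h. t < 2*k \<longrightarrow> h \<in> ?M \<and> col t = Dvec h"
      using c(1) unfolding Dset_def by blast
    obtain H where H: "\<forall>t. t < 2*k \<longrightarrow> H t \<in> ?M \<and> col t = Dvec (H t)"
      using choice[OF exH] by blast
    have "q = (\<lambda>z. detn (2*k) (\<lambda>s t. Dvec (H t) (rw s) z))"
      unfolding c(3) by (intro ext detn_cong) (use H in auto)
    moreover have "(\<lambda>z. detn (2*k) (\<lambda>s t. Dvec (H t) (rw s) z)) \<in> ?R"
      by (rule minor_RHS[OF assms(3) assms(4) _ c(2)]) (use H in auto)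
    ultimately show ?thesis by simp
  qed
  then show ?thesis
    unfolding I_minors_def[of "XX X" "dpt x" "2*k"] ideal_mult_def[of "XX X" "dpt x"]
    by (intro IG_sub) (simp add: ideal_mult_def)
qed


end
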